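(* Let $\mathbf{X}$, $\mathbf{X}'$ and $\mathbf{A}$ be $\sigma$-structures and $k\ge1$, and suppose $\mathbf{X}\equiv_k\mathbf{X}'$. Then $\mathrm{SA}^k(\mathbf{X},\mathbf{A})$ is feasible if and only if $\mathrm{SA}^k(\mathbf{X}',\mathbf{A})$ is feasible.
   Context: A signature $\sigma$ is a finite set of relation symbols with arities $\operatorname{ar}(R)\ge1$; a $\sigma$-structure has finite universe and relations $R^\mathbf{A}\subseteq A^{\operatorname{ar}(R)}$. Constraints: $\mathcal{C}_\mathbf{A}=\{R(\mathbf{a}):R\in\sigma,\mathbf{a}\in R^\mathbf{A}\}$ (formal symbols). For a tuple $\mathbf{a}$, $a_i$ is its $i$-th entry, $\{\mathbf{a}\}$ its entry set, $\pi_\mathbf{i}\mathbf{a}=(a_{i_1},\dots,a_{i_n})$ for $\mathbf{i}=(i_1,\dots,i_n)$. $\equiv_1$: factor graph of $\mathbf{A}$ is the bipartite graph on $A\cup\mathcal{C}_\mathbf{A}$ with edges $\{a,R(\mathbf{a})\}$ for $a\in\{\mathbf{a}\}$ labelled $(\{i:a_i=a\},R)$; $\delta_0^\mathbf{A}(v)$ is one of two fixed symbols according as $v\in A$ or $v\in\mathcal{C}_\mathbf{A}$; $\delta_j^\mathbf{A}(v)=\{\{(\text{label of }\{v,w\},\delta_{j-1}^\mathbf{A}(w)):w\text{ adjacent to }v\}\}$; $\delta^\mathbf{A}(v)=(\delta^\mathbf{A}_j(v))_{j\ge0}$; $\mathbf{A}\equiv_1\mathbf{B}$ iff the multisets of $\delta$-values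 over all factor-graph vertices coincide. $\mathbf{A}^{*k}$: universe $\bigcup_{1\le j\le k}A^j\cup\mathcal{C}_\mathbf{A}$, with unary relations $T_{j,S}=\{\mathbf{a}\in A^j:a_i=a_{i'}\ \forall i,i'\in S\}$ ($j\le k$, $S\subseteq[j]$), $R_S=\{R(\mathbf{a}):\mathbf{a}\in R^\mathbf{A},a_i=a_{i'}\ \forall i,i'\in S\}$ ($R\in\sigma$, $S\subseteq[\operatorname{ar}(R)]$), and binary relations $T_{j,\mathbf{i}}=\{(\mathbf{a},\pi_\mathbf{i}\mathbf{a}):\mathbf{a}\in A^j\}$ ($j,j'\le k$, $\mathbf{i}\in[j]^{j'}$), $R_\mathbf{i}=\{(R(\mathbf{a}),\pi_\mathbf{i}\mathbf{a}):\mathbf{a}\in R^\mathbf{A}\}$ ($R\in\sigma$, $j\le k$, $\mathbf{i}\in[\operatorname{ar}(R)]^j$). For $k\ge2$, $\mathbf{A}\equiv_k\mathbf{B}$ means $\mathbf{A}^{*k}\equiv_1\mathbf{B}^{*k}$; for $k=1$, $\equiv_k$ is $\equiv_1$. $\mathrm{SA}^k(\mathbf{X},\mathbf{A})$: variables $p_V(f)\in[0,1]$ ($V\subseteq X$, $1\le|V|\le k$, $f:V\to A$) and $p_{R(\mathbf{x})}(f)\in[0,1]$ ($R(\mathbf{x})\in\mathcal{C}_\mathbf{X}$, $f:\{\mathbf{x}\}\to A$); constraints $\sum_f p_V(f)=1$; $p_U(f)=\sum_{g:V\to A,g|_U=f}p_V(g)$ for $\emptyset\ne U\subseteq V$, $|V|\le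 k$; $p_U(f)=\sum_{g:\{\mathbf{x}\}\to A,g|_U=f}p_{R(\mathbf{x})}(g)$ for $\emptyset\ne U\subseteq\{\mathbf{x}\}$, $|U|\le k$; $p_{R(\mathbf{x})}(f)=0$ if $f(\mathbf{x})\notin R^\mathbf{A}$. Feasible means a rational solution exists. *)

theory Defs
  imports Complex_Main "HOL-Library.Multiset" "HOL-Library.FuncSet"
begin

text \<open>Tuple positions are indexed from 0 (the paper uses 1-based indices; this is a
  mere relabelling and does not affect any notion below).\<close>

record ('a, 'r) struc =
  univ :: "'a set"
  rels :: "'r \<Rightarrow> 'a list set"

definition wf_sig :: "'r set \<Rightarrow> ('r \<Rightarrow> nat) \<Rightarrow> bool" where
  "wf_sig sig ar \<longleftrightarrow> finite sig \<and> (\<forall>R\<in>sig. 1 \<le> ar R)"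

definition wf_struc :: "'r set \<Rightarrow> ('r \<Rightarrow> nat) \<Rightarrow> ('a, 'r) struc \<Rightarrow> bool" where
  "wf_struc sig ar A \<longleftrightarrow> finite (univ A) \<and>
     (\<forall>R\<in>sig. \<forall>t\<in>rels A R. length t = ar R \<and> set t \<subseteq> univ A)"

definition constraints :: "'r set \<Rightarrow> ('a, 'r) struc \<Rightarrow> ('r \<times> 'a list) set" where
  "constraints sig A = {(R, t) | R t. R \<in> sig \<and> t \<in> rels A R}"

definition fg_vertices :: "'r set \<Rightarrow> ('a, 'r) struc \<Rightarrow> ('a + 'r \<times> 'a list) set" where
  "fg_vertices sig A = Inl ` univ A \<union> Inr ` constraints sig A"

definition edge_label :: "'a \<Rightarrow> 'r \<times> 'a list \<Rightarrow> nat set \<times> 'r" where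
  "edge_label a c = ({i. i < length (snd c) \<and> snd c ! i = a}, fst c)"

datatype 'l colour = Col0 bool | ColN "('l \<times> 'l colour) multiset"

text \<open>delta j v is \<open>\<delta>\<^sub>j(v)\<close>; the two base symbols are Col0 True (elements) and Col0 False (constraints).\<close>
fun delta :: "'r set \<Rightarrow> ('a, 'r) struc \<Rightarrow> nat \<Rightarrow> ('a + 'r \<times> 'a list) \<Rightarrow> (nat set \<times> 'r) colour" where
  "delta sig A 0 v = Col0 (isl v)"
| "delta sig A (Suc j) (Inl a) =
     ColN (image_mset (\<lambda>c. (edge_label a c, delta sig A j (Inr c)))
                      (mset_set {c \<in> constraints sig A. a \<in> set (snd c)}))"
| "delta sig A (Suc j) (Inr c) =
     ColN (image_mset (\<lambda>a. (edge_label a c, delta sig A j (Inl a)))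
                      (mset_set (set (snd c))))"

definition delta_seq :: "'r set \<Rightarrow> ('a, 'r) struc \<Rightarrow> ('a + 'r \<times> 'a list) \<Rightarrow> nat \<Rightarrow> (nat set \<times> 'r) colour" where
  "delta_seq sig A v = (\<lambda>j. delta sig A j v)"

definition equiv1 :: "'r set \<Rightarrow> ('a, 'r) struc \<Rightarrow> ('b, 'r) struc \<Rightarrow> bool" where
  "equiv1 sig A B \<longleftrightarrow>
     image_mset (delta_seq sig A) (mset_set (fg_vertices sig A)) =
     image_mset (delta_seq sig B) (mset_set (fg_vertices sig B))"

text \<open>Symbols: TS j S = \<open>T\<^sub>j\<^sub>,\<^sub>S\<close>, RS R S = \<open>R\<^sub>S\<close> (unary); Ti j i = \<open>T\<^sub>j\<^sub>,\<^sub>i\<close>, Ri R i = \<open>R\<^sub>i\<close> (binary).\<close>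
datatype 'r ksym = TS nat "nat set" | RS 'r "nat set" | Ti nat "nat list" | Ri 'r "nat list"

definition ksig :: "'r set \<Rightarrow> ('r \<Rightarrow> nat) \<Rightarrow> nat \<Rightarrow> 'r ksym set" where
  "ksig sig ar k =
     {TS j S | j S. 1 \<le> j \<and> j \<le> k \<and> S \<subseteq> {..<j}}
   \<union> {RS R S | R S. R \<in> sig \<and> S \<subseteq> {..<ar R}}
   \<union> {Ti j i | j i. 1 \<le> j \<and> j \<le> k \<and> 1 \<le> length i \<and> length i \<le> k \<and> set i \<subseteq> {..<j}}
   \<union> {Ri R i | R i. R \<in> sig \<and> 1 \<le> length i \<and> length i \<le> k \<and> set i \<subseteq> {..<ar R}}"

fun kar :: "'r ksym \<Rightarrow> nat" where
  "kar (TS j S) = 1"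
| "kar (RS R S) = 1"
| "kar (Ti j i) = 2"
| "kar (Ri R i) = 2"

definition tuples :: "'a set \<Rightarrow> nat \<Rightarrow> 'a list set" where
  "tuples A j = {a. length a = j \<and> set a \<subseteq> A}"

definition eq_on :: "nat set \<Rightarrow> 'a list \<Rightarrow> bool" where
  "eq_on S a \<longleftrightarrow> (\<forall>i\<in>S. \<forall>i'\<in>S. a ! i = a ! i')"

definition proj :: "nat list \<Rightarrow> 'a list \<Rightarrow> 'a list" where
  "proj i a = map (\<lambda>n. a ! n) i"

fun kpow_rels :: "('a, 'r) struc \<Rightarrow> 'r ksym \<Rightarrow> ('a list + 'r \<times> 'a list) list set" where
  "kpow_rels A (TS j S) = {[Inl a] | a. a \<in> tuples (univ A) j \<and> eq_on S a}"
| "kpow_rels A (RS R S) = {[Inr (R, a)] | a. a \<in> rels A R \<and> eq_on S a}"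
| "kpow_rels A (Ti j i) = {[Inl a, Inl (proj i a)] | a. a \<in> tuples (univ A) j}"
| "kpow_rels A (Ri R i) = {[Inr (R, a), Inl (proj i a)] | a. a \<in> rels A R}"

definition kpow :: "'r set \<Rightarrow> nat \<Rightarrow> ('a, 'r) struc \<Rightarrow> ('a list + 'r \<times> 'a list, 'r ksym) struc" where
  "kpow sig k A =
     \<lparr> univ = Inl ` (\<Union>j\<in>{1..k}. tuples (univ A) j) \<union> Inr ` constraints sig A,
       rels = kpow_rels A \<rparr>"

definition equivk :: "'r set \<Rightarrow> ('r \<Rightarrow> nat) \<Rightarrow> nat \<Rightarrow> ('a, 'r) struc \<Rightarrow> ('b, 'r) struc \<Rightarrow> bool" where
  "equivk sig ar k A B \<longleftrightarrow>
     (if k = 1 then equiv1 sig A B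
      else equiv1 (ksig sig ar k) (kpow sig k A) (kpow sig k B))"

text \<open>Assignments f from V to A are extensional functions in PiE V (univ A).
  p V f is the variable p_V(f); q c f is p_{R(x)}(f) for c = (R, x).\<close>
definition SA_feasible :: "'r set \<Rightarrow> nat \<Rightarrow> ('x, 'r) struc \<Rightarrow> ('a, 'r) struc \<Rightarrow> bool" where
  "SA_feasible sig k X A \<longleftrightarrow>
    (\<exists>(p :: 'x set \<Rightarrow> ('x \<Rightarrow> 'a) \<Rightarrow> rat) (q :: 'r \<times> 'x list \<Rightarrow> ('x \<Rightarrow> 'a) \<Rightarrow> rat).
       (\<forall>V f. V \<subseteq> univ X \<and> 1 \<le> card V \<and> card V \<le> k \<and> f \<in> V \<rightarrow>\<^sub>E univ A
              \<longrightarrow> 0 \<le> p V f \<and> p V f \<le> 1)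
     \<and> (\<forall>c\<in>constraints sig X. \<forall>f \<in> set (snd c) \<rightarrow>\<^sub>E univ A. 0 \<le> q c f \<and> q c f \<le> 1)
     \<and> (\<forall>V. V \<subseteq> univ X \<and> 1 \<le> card V \<and> card V \<le> k
              \<longrightarrow> (\<Sum>f \<in> V \<rightarrow>\<^sub>E univ A. p V f) = 1)
     \<and> (\<forall>U V f. U \<noteq> {} \<and> U \<subseteq> V \<and> V \<subseteq> univ X \<and> card V \<le> k \<and> f \<in> U \<rightarrow>\<^sub>E univ A
              \<longrightarrow> p U f = (\<Sum>g \<in> {g \<in> V \<rightarrow>\<^sub>E univ A. restrict g U = f}. p V g))
     \<and> (\<forall>c\<in>constraints sig X. \<forall>U f. U \<noteq> {} \<and> U \<subseteq> set (snd c) \<and> card U \<le> k \<and> f \<in> U \<rightarrow>\<^sub>E univ A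
              \<longrightarrow> p U f = (\<Sum>g \<in> {g \<in> set (snd c) \<rightarrow>\<^sub>E univ A. restrict g U = f}. q c g))
     \<and> (\<forall>c\<in>constraints sig X. \<forall>f \<in> set (snd c) \<rightarrow>\<^sub>E univ A.
              map f (snd c) \<notin> rels A (fst c) \<longrightarrow> q c f = 0))"

end

theory Submission
  imports Defs
begin


lemma in_mset_set_D: "x \<in># mset_set S \<Longrightarrow> x \<in> S"
  by (cases "finite S") auto

lemma count_image_mset_set:
  assumes "finite S"
  shows "count (image_mset f (mset_set S)) y = card {x\<in>S. f x = y}"
proof -
  have "count (image_mset f (mset_set S)) y = (\<Sum>x\<in>f -` {y} \<inter> S. 1)"
    using assms by (simp add: count_image_mset)
  also have "\<dots> = card (f -` {y} \<inter> S)" by simp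
  also have "f -` {y} \<inter> S = {x\<in>S. f x = y}" by auto
  finally show ?thesis .
qed

definition okv :: "('a + 'r \<times> 'a list) \<Rightarrow> bool" where
  "okv v = (case v of Inl _ \<Rightarrow> True | Inr c \<Rightarrow> snd c \<noteq> [])"

fun trunc :: "nat \<Rightarrow> 'l colour \<Rightarrow> 'l colour" where
  "trunc j (Col0 b) = Col0 b"
| "trunc 0 (ColN M) = Col0 (\<forall>e\<in>#M. snd e = Col0 False)"
| "trunc (Suc j) (ColN M) = ColN (image_mset (\<lambda>e. (fst e, trunc j (snd e))) M)"

lemma delta_trunc:
  assumes ne: "\<forall>c\<in>constraints sig A. snd c \<noteq> []" and "okv v"
  shows "trunc j (delta sig A (Suc j) v) = delta sig A j v"
  using assms(2)
proof (induction j arbitrary: v)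
  case 0
  show ?case
  proof (cases v)
    case (Inl a)
    then show ?thesis by auto
  next
    case (Inr c)
    then have "snd c \<noteq> []" using 0 by (simp add: okv_def)
    then obtain a where "a \<in> set (snd c)" by (cases "snd c") auto
    then have "(edge_label a c, Col0 True) \<in># image_mset (\<lambda>a. (edge_label a c, delta sig A 0 (Inl a))) (mset_set (set (snd c)))"
      by auto
    then show ?thesis using Inr by auto
  qed
next
  case (Suc j)
  show ?case
  proof (cases v)
    case (Inl a)
    have ok: "okv (Inr c)" if "c \<in># mset_set {c \<in> constraints sig A. a \<in> set (snd c)}" for c
      using ne in_mset_set_D[OF that] by (auto simp: okv_def)
    have "image_mset (\<lambda>x. (edge_label a x, trunc j (delta sig A (Suc j) (Inr x)))) (mset_set {c \<in> constraints sig A. a \<in> set (snd c)})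
        = image_mset (\<lambda>x. (edge_label a x, delta sig A j (Inr x))) (mset_set {c \<in> constraints sig A. a \<in> set (snd c)})"
      by (rule image_mset_cong) (simp only: Suc.IH[OF ok])
    then show ?thesis using Inl
      by (simp only: delta.simps(2) trunc.simps(3) multiset.map_comp o_def fst_conv snd_conv)
  next
    case (Inr c)
    have ok: "trunc j (delta sig A (Suc j) (Inl x)) = delta sig A j (Inl x)" for x
      by (rule Suc.IH) (simp add: okv_def)
    have "image_mset (\<lambda>x. (edge_label x c, trunc j (delta sig A (Suc j) (Inl x)))) (mset_set (set (snd c)))
        = image_mset (\<lambda>x. (edge_label x c, delta sig A j (Inl x))) (mset_set (set (snd c)))"
      by (rule image_mset_cong) (simp only: ok)
    then show ?thesis using Inr
      by (simp only: delta.simps(3) trunc.simps(3) multiset.map_comp o_def fst_conv snd_conv)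
  qed
qed

lemma image_mset_inj_eq:
  assumes "inj_on f (set_mset M \<union> set_mset N)" "image_mset f M = image_mset f N"
  shows "M = N"
proof (rule multiset_eqI)
  fix x
  show "count M x = count N x"
  proof (cases "x \<in># M \<or> x \<in># N")
    case True
    have "count (image_mset f M) (f x) = (\<Sum>y\<in>f -` {f x} \<inter> set_mset M. count M y)"
      by (simp add: count_image_mset)
    also have "f -` {f x} \<inter> set_mset M = (if x \<in># M then {x} else {})"
      using assms(1) True by (auto simp: inj_on_def)
    finally have 1: "count (image_mset f M) (f x) = count M x" by (auto simp: not_in_iff)
    have "count (image_mset f N) (f x) = (\<Sum>y\<in>f -` {f x} \<inter> set_mset N. count N y)"
      by (simp add: count_image_mset)
    also have "f -` {f x} \<inter> set_mset N = (if x \<in># N then {x} else {})"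
      using assms(1) True by (auto simp: inj_on_def)
    finally have 2: "count (image_mset f N) (f x) = count N x" by (auto simp: not_in_iff)
    show ?thesis using 1 2 assms(2) by simp
  next
    case False then show ?thesis by (simp add: not_in_iff)
  qed
qed

lemma seq_down:
  assumes "\<forall>j. s j = T j (s (Suc j))" "\<forall>j. s' j = T j (s' (Suc j))" "s J = s' J" "j \<le> J"
  shows "s j = s' j"
  using assms(4,3)
proof (induction J rule: dec_induct)
  case base then show ?case by simp
next
  case (step n)
  then show ?case using assms(1,2) by metis
qed

lemma ms_seq_eq:
  fixes M N :: "('l \<times> (nat \<Rightarrow> 'c)) multiset"
  assumes eqs: "\<forall>j. image_mset (\<lambda>e. (fst e, snd e j)) M = image_mset (\<lambda>e. (fst e, snd e j)) N"
    and tr: "\<forall>e \<in> set_mset M \<union> set_mset N. \<forall>j. snd e j = T j (snd e (Suc j))"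
  shows "M = N"
proof -
  define F where "F = set_mset M \<union> set_mset N"
  have finF: "finite F" unfolding F_def by simp
  define Ds where "Ds = {(LEAST j. snd e j \<noteq> snd e' j) | e e'. e \<in> F \<and> e' \<in> F \<and> snd e \<noteq> snd e'}"
  have "Ds \<subseteq> (\<lambda>(e,e'). (LEAST j. snd e j \<noteq> snd e' j)) ` (F \<times> F)" unfolding Ds_def by (auto intro: rev_image_eqI)
  then have finD: "finite Ds" using finF finite_subset by blast
  define J where "J = Max (insert 0 Ds)"
  have "inj_on (\<lambda>e. (fst e, snd e J)) F"
  proof (rule inj_onI)
    fix e e' assume e: "e \<in> F" "e' \<in> F" and eq: "(fst e, snd e J) = (fst e', snd e' J)"
    have "snd e = snd e'"
    proof (rule ccontr)
      assume ne: "snd e \<noteq> snd e'"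
      define j0 where "j0 = (LEAST j. snd e j \<noteq> snd e' j)"
      have "\<exists>j. snd e j \<noteq> snd e' j" using ne by auto
      then have j0: "snd e j0 \<noteq> snd e' j0" unfolding j0_def by (rule LeastI_ex)
      have "j0 \<in> Ds" unfolding Ds_def j0_def using e ne by blast
      then have "j0 \<le> J" unfolding J_def using finD by simp
      moreover have "snd e j0 = snd e' j0"
        using seq_down[of "snd e" T "snd e'" J j0] tr e eq unfolding F_def
        by (meson calculation prod.inject)
      ultimately show False using j0 by simp
    qed
    then show "e = e'" using eq by (simp add: prod_eq_iff)
  qed
  then show ?thesis using eqs image_mset_inj_eq unfolding F_def by blast
qed

definition nbrs_l :: "'r set \<Rightarrow> ('a, 'r) struc \<Rightarrow> 'a \<Rightarrow> ((nat set \<times> 'r) \<times> (nat \<Rightarrow> (nat set \<times> 'r) colour)) multiset" where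
  "nbrs_l sig A a = image_mset (\<lambda>c. (edge_label a c, delta_seq sig A (Inr c))) (mset_set {c \<in> constraints sig A. a \<in> set (snd c)})"

definition nbrs_r :: "'r set \<Rightarrow> ('a, 'r) struc \<Rightarrow> 'r \<times> 'a list \<Rightarrow> ((nat set \<times> 'r) \<times> (nat \<Rightarrow> (nat set \<times> 'r) colour)) multiset" where
  "nbrs_r sig A c = image_mset (\<lambda>a. (edge_label a c, delta_seq sig A (Inl a))) (mset_set (set (snd c)))"

lemma stab_l:
  fixes A :: "('a, 'r) struc" and B :: "('b, 'r) struc"
  assumes neA: "\<forall>c\<in>constraints sig A. snd c \<noteq> []" and neB: "\<forall>c\<in>constraints sig B. snd c \<noteq> []"
    and eq: "delta_seq sig A (Inl a) = delta_seq sig B (Inl b)"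
  shows "nbrs_l sig A a = nbrs_l sig B b"
proof (rule ms_seq_eq[where T = trunc])
  show "\<forall>j. image_mset (\<lambda>e. (fst e, snd e j)) (nbrs_l sig A a) = image_mset (\<lambda>e. (fst e, snd e j)) (nbrs_l sig B b)"
  proof
    fix j
    have "delta sig A (Suc j) (Inl a) = delta sig B (Suc j) (Inl b)"
      using eq unfolding delta_seq_def by metis
    then show "image_mset (\<lambda>e. (fst e, snd e j)) (nbrs_l sig A a) = image_mset (\<lambda>e. (fst e, snd e j)) (nbrs_l sig B b)"
      by (simp add: nbrs_l_def multiset.map_comp o_def delta_seq_def)
  qed
  show "\<forall>e\<in>set_mset (nbrs_l sig A a) \<union> set_mset (nbrs_l sig B b). \<forall>j. snd e j = trunc j (snd e (Suc j))"
  proof (intro ballI allI)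
    fix e j assume "e \<in> set_mset (nbrs_l sig A a) \<union> set_mset (nbrs_l sig B b)"
    then show "snd e j = trunc j (snd e (Suc j))"
    proof
      assume "e \<in> set_mset (nbrs_l sig A a)"
      then obtain c where c: "c \<in> constraints sig A" "e = (edge_label a c, delta_seq sig A (Inr c))"
        unfolding nbrs_l_def by (auto dest: in_mset_set_D)
      then show ?thesis using delta_trunc[OF neA, of "Inr c" j] neA by (auto simp: okv_def delta_seq_def)
    next
      assume "e \<in> set_mset (nbrs_l sig B b)"
      then obtain c where c: "c \<in> constraints sig B" "e = (edge_label b c, delta_seq sig B (Inr c))"
        unfolding nbrs_l_def by (auto dest: in_mset_set_D)
      then show ?thesis using delta_trunc[OF neB, of "Inr c" j] neB by (auto simp: okv_def delta_seq_def)
    qed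
  qed
qed

lemma stab_r:
  fixes A :: "('a, 'r) struc" and B :: "('b, 'r) struc"
  assumes neA: "\<forall>c\<in>constraints sig A. snd c \<noteq> []" and neB: "\<forall>c\<in>constraints sig B. snd c \<noteq> []"
    and eq: "delta_seq sig A (Inr c) = delta_seq sig B (Inr d)"
  shows "nbrs_r sig A c = nbrs_r sig B d"
proof (rule ms_seq_eq[where T = trunc])
  show "\<forall>j. image_mset (\<lambda>e. (fst e, snd e j)) (nbrs_r sig A c) = image_mset (\<lambda>e. (fst e, snd e j)) (nbrs_r sig B d)"
  proof
    fix j
    have "delta sig A (Suc j) (Inr c) = delta sig B (Suc j) (Inr d)"
      using eq unfolding delta_seq_def by metis
    then show "image_mset (\<lambda>e. (fst e, snd e j)) (nbrs_r sig A c) = image_mset (\<lambda>e. (fst e, snd e j)) (nbrs_r sig B d)"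
      by (simp add: nbrs_r_def multiset.map_comp o_def delta_seq_def)
  qed
  show "\<forall>e\<in>set_mset (nbrs_r sig A c) \<union> set_mset (nbrs_r sig B d). \<forall>j. snd e j = trunc j (snd e (Suc j))"
  proof (intro ballI allI)
    fix e j assume "e \<in> set_mset (nbrs_r sig A c) \<union> set_mset (nbrs_r sig B d)"
    then show "snd e j = trunc j (snd e (Suc j))"
    proof
      assume "e \<in> set_mset (nbrs_r sig A c)"
      then obtain a where "e = (edge_label a c, delta_seq sig A (Inl a))"
        unfolding nbrs_r_def by auto
      then show ?thesis using delta_trunc[OF neA, of "Inl a" j] by (auto simp: okv_def delta_seq_def)
    next
      assume "e \<in> set_mset (nbrs_r sig B d)"
      then obtain a where "e = (edge_label a d, delta_seq sig B (Inl a))"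
        unfolding nbrs_r_def by auto
      then show ?thesis using delta_trunc[OF neB, of "Inl a" j] by (auto simp: okv_def delta_seq_def)
    qed
  qed
qed



definition avg :: "('i \<Rightarrow> 'h \<Rightarrow> rat) \<Rightarrow> 'i set \<Rightarrow> 'h \<Rightarrow> rat" where
  "avg F S = (\<lambda>h. (\<Sum>i\<in>S. F i h) / of_nat (card S))"

lemma fg_vertices_finite:
  "finite (univ Y) \<Longrightarrow> finite (constraints sig Y) \<Longrightarrow> finite (fg_vertices sig Y)"
  by (simp add: fg_vertices_def)

lemma avg_Sigma_l:
  fixes D :: "'a set" and C :: "'a \<Rightarrow> 'b set"
  assumes "finite D" "\<forall>a\<in>D. finite (C a)" "\<forall>a\<in>D. card (C a) = m" "m > 0"
  shows "avg (\<lambda>e. F (fst e)) (Sigma D C) = avg F D"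
proof
  fix h
  have "(\<Sum>e\<in>Sigma D C. F (fst e) h) = (\<Sum>a\<in>D. \<Sum>c\<in>C a. F a h)"
    using assms by (subst sum.Sigma) (auto simp: case_prod_beta)
  also have "\<dots> = (\<Sum>a\<in>D. of_nat m * F a h)" using assms by simp
  also have "\<dots> = of_nat m * (\<Sum>a\<in>D. F a h)" by (simp add: sum_distrib_left)
  finally have 1: "(\<Sum>e\<in>Sigma D C. F (fst e) h) = of_nat m * (\<Sum>a\<in>D. F a h)" .
  have 2: "card (Sigma D C) = m * card D" using assms by simp
  show "avg (\<lambda>e. F (fst e)) (Sigma D C) h = avg F D h"
    unfolding avg_def using 1 2 assms(4) by simp
qed

theorem transfer:
  fixes sig :: "'r set" and Y :: "('u,'r) struc" and Z :: "('v,'r) struc"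
    and Psi :: "bool \<Rightarrow> ('h \<Rightarrow> rat) \<Rightarrow> bool"
    and Lam :: "nat set \<times> 'r \<Rightarrow> ('h \<Rightarrow> rat) \<Rightarrow> ('h \<Rightarrow> rat) \<Rightarrow> bool"
    and P :: "'u + 'r \<times> 'u list \<Rightarrow> 'h \<Rightarrow> rat"
  assumes finY: "finite (univ Y)" "finite (constraints sig Y)"
    and finZ: "finite (univ Z)" "finite (constraints sig Z)"
    and wfY: "\<forall>c\<in>constraints sig Y. snd c \<noteq> [] \<and> set (snd c) \<subseteq> univ Y"
    and wfZ: "\<forall>c\<in>constraints sig Z. snd c \<noteq> [] \<and> set (snd c) \<subseteq> univ Z"
    and eq: "equiv1 sig Y Z"
    and cPsi: "\<And>b (S::('u + 'r \<times> 'u list) set) F. finite S \<Longrightarrow> S \<noteq> {} \<Longrightarrow> (\<forall>i\<in>S. Psi b (F i)) \<Longrightarrow> Psi b (avg F S)"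
    and cLam: "\<And>l (S::('u \<times> ('r \<times> 'u list)) set) F G. finite S \<Longrightarrow> S \<noteq> {} \<Longrightarrow> (\<forall>i\<in>S. Lam l (F i) (G i)) \<Longrightarrow> Lam l (avg F S) (avg G S)"
    and solP: "\<forall>v\<in>fg_vertices sig Y. Psi (isl v) (P v)"
    and solL: "\<forall>c\<in>constraints sig Y. \<forall>a\<in>set (snd c). Lam (edge_label a c) (P (Inl a)) (P (Inr c))"
  shows "\<exists>P'::'v + 'r \<times> 'v list \<Rightarrow> 'h \<Rightarrow> rat. (\<forall>v\<in>fg_vertices sig Z. Psi (isl v) (P' v)) \<and>
           (\<forall>c\<in>constraints sig Z. \<forall>a\<in>set (snd c). Lam (edge_label a c) (P' (Inl a)) (P' (Inr c)))"
proof -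
  have neY: "\<forall>c\<in>constraints sig Y. snd c \<noteq> []" and neZ: "\<forall>c\<in>constraints sig Z. snd c \<noteq> []"
    using wfY wfZ by auto
  define cls where "cls v = {u \<in> fg_vertices sig Y. delta_seq sig Y u = delta_seq sig Z v}" for v
  define P' where "P' v = avg P (cls v)" for v
  have finfgY: "finite (fg_vertices sig Y)" using finY by (rule fg_vertices_finite)
  have finfgZ: "finite (fg_vertices sig Z)" using finZ by (rule fg_vertices_finite)
  have finc: "finite (cls v)" for v unfolding cls_def using finfgY by simp
  have clsne: "cls v \<noteq> {}" if "v \<in> fg_vertices sig Z" for v
  proof -
    have "delta_seq sig Z v \<in># image_mset (delta_seq sig Z) (mset_set (fg_vertices sig Z))"
      using that finfgZ by simp
    then have "delta_seq sig Z v \<in># image_mset (delta_seq sig Y) (mset_set (fg_vertices sig Y))"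
      using eq unfolding equiv1_def by simp
    then obtain u where "u \<in> fg_vertices sig Y" "delta_seq sig Y u = delta_seq sig Z v"
      using finfgY by auto
    then show ?thesis unfolding cls_def by auto
  qed
  have clsisl: "isl u = isl v" if "u \<in> cls v" for u v
  proof -
    have "delta_seq sig Y u = delta_seq sig Z v" using that unfolding cls_def by simp
    then have "delta_seq sig Y u 0 = delta_seq sig Z v 0" by simp
    then show ?thesis by (simp add: delta_seq_def)
  qed
  have part1: "\<forall>v\<in>fg_vertices sig Z. Psi (isl v) (P' v)"
  proof
    fix v assume v: "v \<in> fg_vertices sig Z"
    have "\<forall>u\<in>cls v. Psi (isl v) (P u)"
    proof
      fix u assume u: "u \<in> cls v"
      then have "u \<in> fg_vertices sig Y" unfolding cls_def by simp
      then have "Psi (isl u) (P u)" using solP by blast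
      then show "Psi (isl v) (P u)" using clsisl[OF u] by simp
    qed
    then show "Psi (isl v) (P' v)" unfolding P'_def by (rule cPsi[OF finc clsne[OF v]])
  qed
  have part2: "Lam (edge_label a' c') (P' (Inl a')) (P' (Inr c'))"
    if c': "c' \<in> constraints sig Z" and a': "a' \<in> set (snd c')" for a' c'
  proof -
    define l where "l = edge_label a' c'"
    define \<kappa> where "\<kappa> = delta_seq sig Z (Inl a')"
    define \<mu> where "\<mu> = delta_seq sig Z (Inr c')"
    define D where "D = {a \<in> univ Y. delta_seq sig Y (Inl a) = \<kappa>}"
    define E where "E = {c \<in> constraints sig Y. delta_seq sig Y (Inr c) = \<mu>}"
    define Cs where "Cs a = {c \<in> E. a \<in> set (snd c) \<and> edge_label a c = l}" for a
    define As where "As c = {a \<in> D. a \<in> set (snd c) \<and> edge_label a c = l}" for c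
    have finD: "finite D" unfolding D_def using finY by simp
    have finE: "finite E" unfolding E_def using finY by simp
    have a'Z: "Inl a' \<in> fg_vertices sig Z" using wfZ c' a' by (auto simp: fg_vertices_def)
    have c'Z: "Inr c' \<in> fg_vertices sig Z" using c' by (auto simp: fg_vertices_def)
    have clsD: "cls (Inl a') = Inl ` D"
    proof
      show "cls (Inl a') \<subseteq> Inl ` D"
      proof
        fix u assume u: "u \<in> cls (Inl a')"
        then have "isl u" using clsisl by fastforce
        then obtain a where "u = Inl a" by (cases u) auto
        then show "u \<in> Inl ` D" using u unfolding cls_def D_def \<kappa>_def fg_vertices_def by auto
      qed
      show "Inl ` D \<subseteq> cls (Inl a')" unfolding cls_def D_def \<kappa>_def fg_vertices_def by auto
    qed
    have clsE: "cls (Inr c') = Inr ` E"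
    proof
      show "cls (Inr c') \<subseteq> Inr ` E"
      proof
        fix u assume u: "u \<in> cls (Inr c')"
        then have "\<not> isl u" using clsisl by fastforce
        then obtain c where "u = Inr c" by (cases u) auto
        then show "u \<in> Inr ` E" using u unfolding cls_def E_def \<mu>_def fg_vertices_def by auto
      qed
      show "Inr ` E \<subseteq> cls (Inr c')" unfolding cls_def E_def \<mu>_def fg_vertices_def by auto
    qed
    define m where "m = count (nbrs_l sig Z a') (l, \<mu>)"
    define n where "n = count (nbrs_r sig Z c') (l, \<kappa>)"
    have cardCs: "card (Cs a) = m" if "a \<in> D" for a
    proof -
      have "nbrs_l sig Y a = nbrs_l sig Z a'"
        using stab_l[OF neY neZ] that unfolding D_def \<kappa>_def by auto
      then have "m = count (nbrs_l sig Y a) (l, \<mu>)" unfolding m_def by simp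
      also have "\<dots> = card {c \<in> {c \<in> constraints sig Y. a \<in> set (snd c)}. (edge_label a c, delta_seq sig Y (Inr c)) = (l, \<mu>)}"
        unfolding nbrs_l_def using finY by (subst count_image_mset_set) auto
      also have "{c \<in> {c \<in> constraints sig Y. a \<in> set (snd c)}. (edge_label a c, delta_seq sig Y (Inr c)) = (l, \<mu>)} = Cs a"
        unfolding Cs_def E_def by auto
      finally show ?thesis by simp
    qed
    have cardAs: "card (As c) = n" if "c \<in> E" for c
    proof -
      have "nbrs_r sig Y c = nbrs_r sig Z c'"
        using stab_r[OF neY neZ] that unfolding E_def \<mu>_def by auto
      then have "n = count (nbrs_r sig Y c) (l, \<kappa>)" unfolding n_def by simp
      also have "\<dots> = card {a \<in> set (snd c). (edge_label a c, delta_seq sig Y (Inl a)) = (l, \<kappa>)}"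
        unfolding nbrs_r_def by (subst count_image_mset_set) auto
      also have "{a \<in> set (snd c). (edge_label a c, delta_seq sig Y (Inl a)) = (l, \<kappa>)} = As c"
        unfolding As_def D_def using wfY that unfolding E_def by auto
      finally show ?thesis by simp
    qed
    have mpos: "m > 0"
    proof -
      have "c' \<in> {c \<in> constraints sig Z. a' \<in> set (snd c)}" using c' a' by simp
      then have "(l, \<mu>) \<in># nbrs_l sig Z a'" unfolding nbrs_l_def l_def \<mu>_def
        using finZ by auto
      then show ?thesis unfolding m_def by simp
    qed
    have npos: "n > 0"
    proof -
      have "(l, \<kappa>) \<in># nbrs_r sig Z c'" unfolding nbrs_r_def l_def \<kappa>_def
        using a' by auto
      then show ?thesis unfolding n_def by simp
    qed
    define Ed where "Ed = Sigma D Cs"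
    have finCs: "\<forall>a\<in>D. finite (Cs a)" unfolding Cs_def using finE by simp
    have finAs: "\<forall>c\<in>E. finite (As c)" unfolding As_def using finD by simp
    have Ed2: "Ed = prod.swap ` Sigma E As"
    proof (rule set_eqI)
      fix x show "x \<in> Ed \<longleftrightarrow> x \<in> prod.swap ` Sigma E As"
        unfolding Ed_def by (cases x) (auto simp: Cs_def As_def image_iff)
    qed
    have avg1: "avg (\<lambda>e. P (Inl (fst e))) Ed = P' (Inl a')"
    proof -
      have "avg (\<lambda>e. P (Inl (fst e))) Ed = avg (\<lambda>a. P (Inl a)) D"
        unfolding Ed_def by (rule avg_Sigma_l[OF finD finCs _ mpos]) (use cardCs in auto)
      also have "\<dots> = avg P (Inl ` D)"
        unfolding avg_def by (simp add: sum.reindex card_image)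
      finally show ?thesis unfolding P'_def clsD .
    qed
    have avg2: "avg (\<lambda>e. P (Inr (snd e))) Ed = P' (Inr c')"
    proof -
      have "avg (\<lambda>e. P (Inr (snd e))) Ed = avg (\<lambda>e. P (Inr (fst e))) (Sigma E As)"
        unfolding Ed2 avg_def by (simp add: sum.reindex card_image)
      also have "\<dots> = avg (\<lambda>c. P (Inr c)) E"
        by (rule avg_Sigma_l[OF finE finAs _ npos]) (use cardAs in auto)
      also have "\<dots> = avg P (Inr ` E)"
        unfolding avg_def by (simp add: sum.reindex card_image)
      finally show ?thesis unfolding P'_def clsE .
    qed
    have Edne: "Ed \<noteq> {}"
    proof -
      obtain a where "a \<in> D" using clsne[OF a'Z] clsD by auto
      moreover have "Cs a \<noteq> {}" using cardCs[OF \<open>a \<in> D\<close>] mpos by auto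
      ultimately show ?thesis unfolding Ed_def by auto
    qed
    have finEd: "finite Ed" unfolding Ed_def using finD finCs by simp
    have "\<forall>e\<in>Ed. Lam l (P (Inl (fst e))) (P (Inr (snd e)))"
      using solL unfolding Ed_def Cs_def E_def by auto
    then have "Lam l (avg (\<lambda>e. P (Inl (fst e))) Ed) (avg (\<lambda>e. P (Inr (snd e))) Ed)"
      by (rule cLam[OF finEd Edne])
    then show ?thesis using avg1 avg2 l_def by simp
  qed
  show ?thesis using part1 part2 by blast
qed



definition cmpt :: "'x list \<Rightarrow> 'a list \<Rightarrow> bool" where
  "cmpt t h \<longleftrightarrow> length h = length t \<and> (\<forall>i<length t. \<forall>j<length t. t!i = t!j \<longrightarrow> h!i = h!j)"

definition idx :: "'x list \<Rightarrow> 'x \<Rightarrow> nat" where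
  "idx t y = (LEAST i. i < length t \<and> t!i = y)"

definition fun_of :: "'x list \<Rightarrow> 'a list \<Rightarrow> 'x \<Rightarrow> 'a" where
  "fun_of t h = (\<lambda>y\<in>set t. h ! idx t y)"

definition enc :: "'a set \<Rightarrow> 'x list \<Rightarrow> (('x \<Rightarrow> 'a) \<Rightarrow> rat) \<Rightarrow> 'a list \<Rightarrow> rat" where
  "enc B t F h = (if h \<in> tuples B (length t) \<and> cmpt t h then F (fun_of t h) else 0)"

lemma finite_tuples: "finite B \<Longrightarrow> finite (tuples B n)"
proof -
  assume "finite B"
  then have "finite {xs. set xs \<subseteq> B \<and> length xs = n}" by (rule finite_lists_length_eq)
  moreover have "tuples B n = {xs. set xs \<subseteq> B \<and> length xs = n}" unfolding tuples_def by auto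
  ultimately show ?thesis by simp
qed

lemma idx: assumes "y \<in> set t" shows "idx t y < length t" "t ! idx t y = y"
proof -
  have "\<exists>i. i < length t \<and> t!i = y" using assms by (simp add: in_set_conv_nth)
  then have "idx t y < length t \<and> t ! idx t y = y" unfolding idx_def by (rule LeastI_ex)
  then show "idx t y < length t" "t ! idx t y = y" by auto
qed

lemma map_fun_of: assumes "cmpt t h" shows "map (fun_of t h) t = h"
proof (rule nth_equalityI)
  show "length (map (fun_of t h) t) = length h" using assms by (simp add: cmpt_def)
  fix i assume "i < length (map (fun_of t h) t)"
  then have i: "i < length t" by simp
  have ti: "t ! i \<in> set t" using i by simp
  have a: "idx t (t!i) < length t" using idx(1)[OF ti] .
  have b: "t ! idx t (t!i) = t!i" using idx(2)[OF ti] .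
  have "h ! idx t (t!i) = h ! i" using assms a b i unfolding cmpt_def by blast
  then show "map (fun_of t h) t ! i = h ! i"
    using i ti unfolding fun_of_def by simp
qed

lemma fun_of_map: assumes "f \<in> set t \<rightarrow>\<^sub>E B" shows "fun_of t (map f t) = f"
proof
  fix y show "fun_of t (map f t) y = f y"
  proof (cases "y \<in> set t")
    case True
    then show ?thesis using idx[OF True] unfolding fun_of_def by simp
  next
    case False
    then show ?thesis using assms unfolding fun_of_def by (auto simp: PiE_def extensional_def)
  qed
qed

lemma map_cmpt: "cmpt t (map f t)"
  unfolding cmpt_def by auto

lemma map_tuples: "f \<in> set t \<rightarrow>\<^sub>E B \<Longrightarrow> map f t \<in> tuples B (length t)"
  unfolding tuples_def by auto

lemma fun_of_PiE: assumes "h \<in> tuples B (length t)" shows "fun_of t h \<in> set t \<rightarrow>\<^sub>E B"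
proof -
  have "h ! idx t y \<in> B" if "y \<in> set t" for y
    using idx[OF that] assms unfolding tuples_def by (auto simp: subset_iff)
  then show ?thesis unfolding fun_of_def by auto
qed

lemma bij_map_tuples:
  "bij_betw (\<lambda>f. map f t) (set t \<rightarrow>\<^sub>E B) {h \<in> tuples B (length t). cmpt t h}"
proof (rule bij_betw_byWitness[where f' = "fun_of t"])
  show "\<forall>f\<in>set t \<rightarrow>\<^sub>E B. fun_of t (map f t) = f" using fun_of_map by blast
  show "\<forall>h\<in>{h \<in> tuples B (length t). cmpt t h}. map (fun_of t h) t = h" using map_fun_of by blast
  show "(\<lambda>f. map f t) ` (set t \<rightarrow>\<^sub>E B) \<subseteq> {h \<in> tuples B (length t). cmpt t h}"
    using map_tuples map_cmpt by blast
  show "fun_of t ` {h \<in> tuples B (length t). cmpt t h} \<subseteq> set t \<rightarrow>\<^sub>E B"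
    using fun_of_PiE by blast
qed

lemma sum_cmpt:
  assumes "finite B" "\<And>h. h \<in> tuples B (length t) \<Longrightarrow> \<not> cmpt t h \<Longrightarrow> G h = 0"
  shows "(\<Sum>h\<in>tuples B (length t). G h) = (\<Sum>f\<in>set t \<rightarrow>\<^sub>E B. G (map f t))"
proof -
  have "(\<Sum>h\<in>tuples B (length t). G h) = (\<Sum>h\<in>{h \<in> tuples B (length t). cmpt t h}. G h)"
    using assms by (intro sum.mono_neutral_right) (auto simp: finite_tuples)
  also have "\<dots> = (\<Sum>f\<in>set t \<rightarrow>\<^sub>E B. G (map f t))"
    by (rule sum.reindex_bij_betw[OF bij_map_tuples, symmetric])
  finally show ?thesis .
qed

lemma enc_map: "f \<in> set t \<rightarrow>\<^sub>E B \<Longrightarrow> enc B t F (map f t) = F f"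
  unfolding enc_def using map_tuples[of f t B] map_cmpt[of t f] fun_of_map[of f t B] by simp

lemma enc_noncmpt: "\<not> cmpt t h \<Longrightarrow> enc B t F h = 0"
  unfolding enc_def by simp

lemma sum_enc:
  assumes "finite B"
  shows "(\<Sum>h\<in>tuples B (length t). enc B t F h) = (\<Sum>f\<in>set t \<rightarrow>\<^sub>E B. F f)"
proof -
  have "(\<Sum>h\<in>tuples B (length t). enc B t F h) = (\<Sum>f\<in>set t \<rightarrow>\<^sub>E B. enc B t F (map f t))"
    by (rule sum_cmpt[OF assms]) (simp add: enc_noncmpt)
  also have "\<dots> = (\<Sum>f\<in>set t \<rightarrow>\<^sub>E B. F f)"
    by (rule sum.cong) (simp_all add: enc_map)
  finally show ?thesis .
qed

lemma proj_map: "set i \<subseteq> {..<length t} \<Longrightarrow> proj i (map g t) = map g (proj i t)"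
  unfolding proj_def by (auto simp: subset_iff)

lemma set_proj: "set i \<subseteq> {..<length t} \<Longrightarrow> set (proj i t) \<subseteq> set t"
  unfolding proj_def by (auto simp: subset_iff)

lemma restrict_eq_map:
  assumes "g \<in> set t \<rightarrow>\<^sub>E B" "f \<in> set s \<rightarrow>\<^sub>E B" "set s \<subseteq> set t"
  shows "restrict g (set s) = f \<longleftrightarrow> map g s = map f s"
proof
  assume "restrict g (set s) = f"
  then show "map g s = map f s" by auto
next
  assume m: "map g s = map f s"
  show "restrict g (set s) = f"
  proof
    fix y show "restrict g (set s) y = f y"
    proof (cases "y \<in> set s")
      case True then show ?thesis using m by simp
    next
      case False then show ?thesis using assms(2) by (auto simp: PiE_def extensional_def)
    qed
  qed
qed

lemma marg_sum:
  assumes finB: "finite B" and G0: "\<And>h. h \<in> tuples B (length t) \<Longrightarrow> \<not> cmpt t h \<Longrightarrow> G h = 0"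
    and i: "set i \<subseteq> {..<length t}" and f: "f \<in> set (proj i t) \<rightarrow>\<^sub>E B"
  shows "(\<Sum>h\<in>{h \<in> tuples B (length t). proj i h = map f (proj i t)}. G h)
       = (\<Sum>g\<in>{g \<in> set t \<rightarrow>\<^sub>E B. restrict g (set (proj i t)) = f}. G (map g t))"
proof -
  let ?s = "proj i t"
  let ?H = "{h \<in> tuples B (length t). proj i h = map f ?s}"
  have "(\<Sum>h\<in>?H. G h) = (\<Sum>h\<in>tuples B (length t). if proj i h = map f ?s then G h else 0)"
    using finB by (simp add: sum.inter_filter finite_tuples)
  also have "\<dots> = (\<Sum>g\<in>set t \<rightarrow>\<^sub>E B. if proj i (map g t) = map f ?s then G (map g t) else 0)"
    by (rule sum_cmpt[OF finB]) (use G0 in auto)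
  also have "\<dots> = (\<Sum>g\<in>set t \<rightarrow>\<^sub>E B. if restrict g (set ?s) = f then G (map g t) else 0)"
  proof (rule sum.cong)
    fix g assume g: "g \<in> set t \<rightarrow>\<^sub>E B"
    have "proj i (map g t) = map f ?s \<longleftrightarrow> restrict g (set ?s) = f"
      by (subst restrict_eq_map[OF g f set_proj[OF i]]) (simp add: proj_map[OF i])
    then show "(if proj i (map g t) = map f ?s then G (map g t) else 0) = (if restrict g (set ?s) = f then G (map g t) else 0)"
      by simp
  qed simp
  also have "\<dots> = (\<Sum>g\<in>{g \<in> set t \<rightarrow>\<^sub>E B. restrict g (set ?s) = f}. G (map g t))"
    using finB by (simp add: sum.inter_filter finite_PiE)
  finally show ?thesis .
qed

lemma proj_cmpt:
  assumes "cmpt t h" "set i \<subseteq> {..<length t}"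
  shows "cmpt (proj i t) (proj i h)"
  using assms unfolding cmpt_def proj_def by (auto simp: subset_iff)

lemma proj_tuples:
  assumes "h \<in> tuples B n" "set i \<subseteq> {..<n}"
  shows "proj i h \<in> tuples B (length i)"
  using assms unfolding tuples_def proj_def by (auto simp: subset_iff)

lemma marg_enc:
  assumes finB: "finite B" and i: "set i \<subseteq> {..<length t}"
  shows "(\<Sum>h\<in>{h \<in> tuples B (length t). proj i h = h'}. enc B t F h)
       = (if h' \<in> tuples B (length i) \<and> cmpt (proj i t) h'
          then (\<Sum>g\<in>{g \<in> set t \<rightarrow>\<^sub>E B. restrict g (set (proj i t)) = fun_of (proj i t) h'}. F g)
          else 0)"
proof (cases "h' \<in> tuples B (length i) \<and> cmpt (proj i t) h'")
  case True
  let ?s = "proj i t"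
  have len: "length ?s = length i" unfolding proj_def by simp
  have f: "fun_of ?s h' \<in> set ?s \<rightarrow>\<^sub>E B" using True len by (intro fun_of_PiE) simp
  have h': "map (fun_of ?s h') ?s = h'" using True map_fun_of by blast
  have "(\<Sum>h\<in>{h \<in> tuples B (length t). proj i h = map (fun_of ?s h') ?s}. enc B t F h)
      = (\<Sum>g\<in>{g \<in> set t \<rightarrow>\<^sub>E B. restrict g (set ?s) = fun_of ?s h'}. enc B t F (map g t))"
    by (rule marg_sum[OF finB _ i f]) (rule enc_noncmpt)
  then have "(\<Sum>h\<in>{h \<in> tuples B (length t). proj i h = h'}. enc B t F h)
      = (\<Sum>g\<in>{g \<in> set t \<rightarrow>\<^sub>E B. restrict g (set ?s) = fun_of ?s h'}. enc B t F (map g t))"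
    by (simp only: h')
  also have "\<dots> = (\<Sum>g\<in>{g \<in> set t \<rightarrow>\<^sub>E B. restrict g (set ?s) = fun_of ?s h'}. F g)"
    by (rule sum.cong) (auto simp: enc_map)
  finally show ?thesis using True by simp
next
  case False
  have "enc B t F h = 0" if "h \<in> tuples B (length t)" "proj i h = h'" for h
  proof (cases "cmpt t h")
    case True
    then have "cmpt (proj i t) h'" using proj_cmpt[OF True i] that by simp
    moreover have "h' \<in> tuples B (length i)" using proj_tuples[OF that(1) i] that by simp
    ultimately show ?thesis using False by simp
  qed (simp add: enc_noncmpt)
  then have "(\<Sum>h\<in>{h \<in> tuples B (length t). proj i h = h'}. enc B t F h) = 0"
    by (intro sum.neutral) auto
  then show ?thesis using False by (simp only: if_False simp_thms)
qed



lemma avg_zero: "(\<forall>i\<in>S. F i h = 0) \<Longrightarrow> avg F S h = 0"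
  unfolding avg_def by simp

lemma avg_bounds:
  assumes "finite S" "S \<noteq> {}" "\<forall>i\<in>S. 0 \<le> F i h \<and> F i h \<le> 1"
  shows "0 \<le> avg F S h \<and> avg F S h \<le> 1"
proof -
  have c: "card S > 0" using assms by (simp add: card_gt_0_iff)
  have "0 \<le> (\<Sum>i\<in>S. F i h)" using assms by (intro sum_nonneg) auto
  moreover have "(\<Sum>i\<in>S. F i h) \<le> (\<Sum>i\<in>S. 1)" using assms by (intro sum_mono) auto
  ultimately show ?thesis using c unfolding avg_def by (simp add: divide_le_eq)
qed

lemma avg_sum:
  assumes "finite S" "finite H"
  shows "(\<Sum>h\<in>H. avg F S h) = (\<Sum>i\<in>S. \<Sum>h\<in>H. F i h) / of_nat (card S)"
  unfolding avg_def using assms by (simp add: sum_divide_distrib[symmetric] sum.swap[of _ H])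

lemma avg_sum_const:
  assumes "finite S" "S \<noteq> {}" "finite H" "\<forall>i\<in>S. (\<Sum>h\<in>H. F i h) = c"
  shows "(\<Sum>h\<in>H. avg F S h) = c"
proof -
  have "card S > 0" using assms by (simp add: card_gt_0_iff)
  then show ?thesis using avg_sum[OF assms(1,3)] assms(4) by simp
qed

lemma avg_lin:
  assumes "finite S" "finite H" "\<forall>i\<in>S. F i h' = (\<Sum>h\<in>H. G i h)"
  shows "avg F S h' = (\<Sum>h\<in>H. avg G S h)"
  using avg_sum[OF assms(1,2), of G] assms(3) unfolding avg_def by simp

lemma avg_eq: "(\<forall>i\<in>S. F i = G i) \<Longrightarrow> avg F S = avg G S"
  unfolding avg_def by simp

definition Psi1 :: "'a set \<Rightarrow> bool \<Rightarrow> ('a list \<Rightarrow> rat) \<Rightarrow> bool" where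
  "Psi1 B b F \<longleftrightarrow> (\<forall>h. 0 \<le> F h \<and> F h \<le> 1) \<and>
     (b \<longrightarrow> (\<forall>h. h \<notin> tuples B 1 \<longrightarrow> F h = 0) \<and> (\<Sum>h\<in>tuples B 1. F h) = 1)"

definition Lam1 :: "('a, 'r) struc \<Rightarrow> ('r \<Rightarrow> nat) \<Rightarrow> nat set \<times> 'r \<Rightarrow> ('a list \<Rightarrow> rat) \<Rightarrow> ('a list \<Rightarrow> rat) \<Rightarrow> bool" where
  "Lam1 A ar l F G \<longleftrightarrow> (\<forall>h. h \<notin> rels A (snd l) \<longrightarrow> G h = 0) \<and> (\<forall>h. \<not> eq_on (fst l) h \<longrightarrow> G h = 0) \<and>
     (\<forall>h'. F h' = (\<Sum>h\<in>{h\<in>tuples (univ A) (ar (snd l)). proj [LEAST i. i \<in> fst l] h = h'}. G h))"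

lemma Psi1_conv:
  assumes "finite B" "finite S" "S \<noteq> {}" "\<forall>i\<in>S. Psi1 B b (F i)"
  shows "Psi1 B b (avg F S)"
proof -
  have "\<forall>h. 0 \<le> avg F S h \<and> avg F S h \<le> 1"
    using assms unfolding Psi1_def by (intro allI avg_bounds) auto
  moreover have "b \<longrightarrow> (\<forall>h. h \<notin> tuples B 1 \<longrightarrow> avg F S h = 0)"
    using assms unfolding Psi1_def by (auto intro!: avg_zero)
  moreover have "b \<longrightarrow> (\<Sum>h\<in>tuples B 1. avg F S h) = 1"
    using assms unfolding Psi1_def by (auto intro!: avg_sum_const simp: finite_tuples)
  ultimately show ?thesis unfolding Psi1_def by blast
qed

lemma Lam1_conv:
  assumes "finite (univ A)" "finite S" "S \<noteq> {}" "\<forall>i\<in>S. Lam1 A ar l (F i) (G i)"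
  shows "Lam1 A ar l (avg F S) (avg G S)"
proof -
  have 1: "\<forall>h. h \<notin> rels A (snd l) \<longrightarrow> avg G S h = 0"
    using assms unfolding Lam1_def by (auto intro!: avg_zero)
  have 2: "\<forall>h. \<not> eq_on (fst l) h \<longrightarrow> avg G S h = 0"
    using assms unfolding Lam1_def by (auto intro!: avg_zero)
  have 3: "\<forall>h'. avg F S h' = (\<Sum>h\<in>{h\<in>tuples (univ A) (ar (snd l)). proj [LEAST i. i \<in> fst l] h = h'}. avg G S h)"
  proof
    fix h'
    show "avg F S h' = (\<Sum>h\<in>{h\<in>tuples (univ A) (ar (snd l)). proj [LEAST i. i \<in> fst l] h = h'}. avg G S h)"
      by (rule avg_lin) (use assms in \<open>auto simp: Lam1_def finite_tuples\<close>)
  qed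
  show ?thesis unfolding Lam1_def using 1 2 3 by blast
qed



lemma wf_cons:
  assumes "wf_struc sig ar X" "c \<in> constraints sig X"
  shows "fst c \<in> sig" "snd c \<in> rels X (fst c)" "length (snd c) = ar (fst c)" "set (snd c) \<subseteq> univ X"
  using assms unfolding wf_struc_def constraints_def by force+

lemma wf_cons_ne:
  assumes "wf_sig sig ar" "wf_struc sig ar X" "c \<in> constraints sig X"
  shows "snd c \<noteq> []"
proof -
  have "1 \<le> ar (fst c)" using assms(1) wf_cons(1)[OF assms(2,3)] unfolding wf_sig_def by blast
  then show ?thesis using wf_cons(3)[OF assms(2,3)] by auto
qed

lemma finite_cons:
  assumes "wf_sig sig ar" "wf_struc sig ar X"
  shows "finite (constraints sig X)"
proof -
  have "constraints sig X \<subseteq> (SIGMA R:sig. tuples (univ X) (ar R))"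
    using assms(2) unfolding constraints_def wf_struc_def tuples_def by auto
  moreover have "finite (SIGMA R:sig. tuples (univ X) (ar R))"
    using assms unfolding wf_sig_def wf_struc_def by (auto intro!: finite_SigmaI finite_tuples)
  ultimately show ?thesis by (rule finite_subset)
qed

lemma rels_tuples:
  assumes "wf_struc sig ar A" "R \<in> sig" "h \<in> rels A R"
  shows "h \<in> tuples (univ A) (ar R)"
  using assms unfolding wf_struc_def tuples_def by auto

lemma card1_E:
  assumes "finite V" "1 \<le> card V" "card V \<le> 1"
  obtains x where "V = {x}"
proof -
  have "card V = 1" using assms by simp
  then show ?thesis using that card_1_singletonE by blast
qed

lemma len1: "length [x] = 1" by simp

lemma proj_single: "i0 < length t \<Longrightarrow> proj [i0] t = [t ! i0]"
  unfolding proj_def by simp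

lemma edge_label_I:
  assumes "x \<in> set (snd c)"
  defines "i0 \<equiv> LEAST i. i \<in> fst (edge_label x c)"
  shows "i0 < length (snd c)" "snd c ! i0 = x"
proof -
  have "\<exists>i. i \<in> fst (edge_label x c)" using assms(1) unfolding edge_label_def
    by (auto simp: in_set_conv_nth)
  then have "i0 \<in> fst (edge_label x c)" unfolding i0_def by (rule LeastI_ex)
  then show "i0 < length (snd c)" "snd c ! i0 = x" unfolding edge_label_def by auto
qed

lemma cmpt_eq_on:
  assumes "cmpt (snd c) h"
  shows "eq_on (fst (edge_label x c)) h"
  using assms unfolding cmpt_def eq_on_def edge_label_def by auto

lemma cmpt_single: "length h = 1 \<Longrightarrow> cmpt [x] h"
  unfolding cmpt_def by auto

lemma PiE_single_restrict:
  assumes "f \<in> {x} \<rightarrow>\<^sub>E B"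
  shows "{g \<in> {x} \<rightarrow>\<^sub>E B. restrict g {x} = f} = {f}"
proof -
  have "restrict g {x} = g" if "g \<in> {x} \<rightarrow>\<^sub>E B" for g
    using that by (simp add: PiE_restrict)
  then show ?thesis using assms by auto
qed

lemma SA_feasibleE:
  fixes X :: "('x, 'r) struc" and A :: "('a, 'r) struc"
  assumes "SA_feasible sig k X A"
  obtains p :: "'x set \<Rightarrow> ('x \<Rightarrow> 'a) \<Rightarrow> rat" and q :: "'r \<times> 'x list \<Rightarrow> ('x \<Rightarrow> 'a) \<Rightarrow> rat" where
     "\<forall>V f. V \<subseteq> univ X \<and> 1 \<le> card V \<and> card V \<le> k \<and> f \<in> V \<rightarrow>\<^sub>E univ A
              \<longrightarrow> 0 \<le> p V f \<and> p V f \<le> 1"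
     "\<forall>c\<in>constraints sig X. \<forall>f \<in> set (snd c) \<rightarrow>\<^sub>E univ A. 0 \<le> q c f \<and> q c f \<le> 1"
     "\<forall>V. V \<subseteq> univ X \<and> 1 \<le> card V \<and> card V \<le> k
              \<longrightarrow> (\<Sum>f \<in> V \<rightarrow>\<^sub>E univ A. p V f) = 1"
     "\<forall>U V f. U \<noteq> {} \<and> U \<subseteq> V \<and> V \<subseteq> univ X \<and> card V \<le> k \<and> f \<in> U \<rightarrow>\<^sub>E univ A
              \<longrightarrow> p U f = (\<Sum>g \<in> {g \<in> V \<rightarrow>\<^sub>E univ A. restrict g U = f}. p V g)"
     "\<forall>c\<in>constraints sig X. \<forall>U f. U \<noteq> {} \<and> U \<subseteq> set (snd c) \<and> card U \<le> k \<and> f \<in> U \<rightarrow>\<^sub>E univ A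
              \<longrightarrow> p U f = (\<Sum>g \<in> {g \<in> set (snd c) \<rightarrow>\<^sub>E univ A. restrict g U = f}. q c g)"
     "\<forall>c\<in>constraints sig X. \<forall>f \<in> set (snd c) \<rightarrow>\<^sub>E univ A.
              map f (snd c) \<notin> rels A (fst c) \<longrightarrow> q c f = 0"
  using assms unfolding SA_feasible_def by (elim exE conjE) (rule that)

lemma enc1:
  fixes X :: "('x, 'r) struc" and A :: "('a, 'r) struc"
  assumes sig: "wf_sig sig ar" and wX: "wf_struc sig ar X" and wA: "wf_struc sig ar A"
    and sa: "SA_feasible sig 1 X A"
  shows "\<exists>P. (\<forall>v\<in>fg_vertices sig X. Psi1 (univ A) (isl v) (P v)) \<and>
    (\<forall>c\<in>constraints sig X. \<forall>a\<in>set (snd c). Lam1 A ar (edge_label a c) (P (Inl a)) (P (Inr c)))"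
proof -
  let ?B = "univ A"
  have finB: "finite ?B" using wA unfolding wf_struc_def by simp
  obtain p :: "'x set \<Rightarrow> ('x \<Rightarrow> 'a) \<Rightarrow> rat" and q :: "'r \<times> 'x list \<Rightarrow> ('x \<Rightarrow> 'a) \<Rightarrow> rat" where
    H1: "\<forall>V f. V \<subseteq> univ X \<and> 1 \<le> card V \<and> card V \<le> 1 \<and> f \<in> V \<rightarrow>\<^sub>E univ A
              \<longrightarrow> 0 \<le> p V f \<and> p V f \<le> 1" and
    H2: "\<forall>c\<in>constraints sig X. \<forall>f \<in> set (snd c) \<rightarrow>\<^sub>E univ A. 0 \<le> q c f \<and> q c f \<le> 1" and
    H3: "\<forall>V. V \<subseteq> univ X \<and> 1 \<le> card V \<and> card V \<le> 1
              \<longrightarrow> (\<Sum>f \<in> V \<rightarrow>\<^sub>E univ A. p V f) = 1" and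
    H5: "\<forall>c\<in>constraints sig X. \<forall>U f. U \<noteq> {} \<and> U \<subseteq> set (snd c) \<and> card U \<le> 1 \<and> f \<in> U \<rightarrow>\<^sub>E univ A
              \<longrightarrow> p U f = (\<Sum>g \<in> {g \<in> set (snd c) \<rightarrow>\<^sub>E univ A. restrict g U = f}. q c g)" and
    H6: "\<forall>c\<in>constraints sig X. \<forall>f \<in> set (snd c) \<rightarrow>\<^sub>E univ A.
              map f (snd c) \<notin> rels A (fst c) \<longrightarrow> q c f = 0"
    using sa by (rule SA_feasibleE)
  have pb: "\<And>V f. V \<subseteq> univ X \<and> 1 \<le> card V \<and> card V \<le> 1 \<and> f \<in> V \<rightarrow>\<^sub>E ?B \<Longrightarrow> 0 \<le> p V f \<and> p V f \<le> 1"
    using H1 by blast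
  have qb: "\<And>c f. c\<in>constraints sig X \<Longrightarrow> f \<in> set (snd c) \<rightarrow>\<^sub>E ?B \<Longrightarrow> 0 \<le> q c f \<and> q c f \<le> 1"
    using H2 by blast
  have ps: "\<And>V. V \<subseteq> univ X \<and> 1 \<le> card V \<and> card V \<le> 1 \<Longrightarrow> (\<Sum>f \<in> V \<rightarrow>\<^sub>E ?B. p V f) = 1"
    using H3 by blast
  have qm: "\<And>c U f. c\<in>constraints sig X \<Longrightarrow> U \<noteq> {} \<and> U \<subseteq> set (snd c) \<and> card U \<le> 1 \<and> f \<in> U \<rightarrow>\<^sub>E ?B
              \<Longrightarrow> p U f = (\<Sum>g \<in> {g \<in> set (snd c) \<rightarrow>\<^sub>E ?B. restrict g U = f}. q c g)"
    using H5 by blast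
  have qz: "\<And>c f. c\<in>constraints sig X \<Longrightarrow> f \<in> set (snd c) \<rightarrow>\<^sub>E ?B \<Longrightarrow>
              map f (snd c) \<notin> rels A (fst c) \<Longrightarrow> q c f = 0"
    using H6 by blast
  define P where "P v = (case v of Inl x \<Rightarrow> enc ?B [x] (p {x}) | Inr c \<Rightarrow> enc ?B (snd c) (q c))" for v
  have Psi: "Psi1 ?B (isl v) (P v)" if v: "v \<in> fg_vertices sig X" for v
  proof (cases v)
    case (Inl x)
    then have x: "x \<in> univ X" using v unfolding fg_vertices_def by auto
    have b: "0 \<le> P v h \<and> P v h \<le> 1" for h
    proof (cases "h \<in> tuples ?B (length [x]) \<and> cmpt [x] h")
      case True
      then have "fun_of [x] h \<in> {x} \<rightarrow>\<^sub>E ?B" using fun_of_PiE[of h ?B "[x]"] by simp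
      then have "0 \<le> p {x} (fun_of [x] h) \<and> p {x} (fun_of [x] h) \<le> 1" using x pb[of "{x}" "fun_of [x] h"] by simp
      then show ?thesis using True Inl unfolding P_def enc_def by simp
    qed (auto simp: P_def enc_def Inl)
    have z: "P v h = 0" if "h \<notin> tuples ?B 1" for h
      using that Inl unfolding P_def enc_def by simp
    have "(\<Sum>h\<in>tuples ?B (length [x]). P v h) = (\<Sum>f\<in>set [x] \<rightarrow>\<^sub>E ?B. p {x} f)"
      unfolding P_def Inl using sum_enc[OF finB, of "[x]" "p {x}"] by simp
    also have "\<dots> = 1" using ps[of "{x}"] x by simp
    finally have s: "(\<Sum>h\<in>tuples ?B 1. P v h) = 1" by simp
    show ?thesis unfolding Psi1_def using b z s Inl by simp
  next
    case (Inr c)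
    then have c: "c \<in> constraints sig X" using v unfolding fg_vertices_def by auto
    have b: "0 \<le> P v h \<and> P v h \<le> 1" for h
    proof (cases "h \<in> tuples ?B (length (snd c)) \<and> cmpt (snd c) h")
      case True
      then have "fun_of (snd c) h \<in> set (snd c) \<rightarrow>\<^sub>E ?B" using fun_of_PiE by blast
      then show ?thesis using True Inr qb[OF c] unfolding P_def enc_def by simp
    qed (auto simp: P_def enc_def Inr)
    then show ?thesis unfolding Psi1_def using Inr by simp
  qed
  have Lam: "Lam1 A ar (edge_label x c) (P (Inl x)) (P (Inr c))"
    if c: "c \<in> constraints sig X" and x: "x \<in> set (snd c)" for c x
  proof -
    define t where "t = snd c"
    define R where "R = fst c"
    define i0 where "i0 = (LEAST i. i \<in> fst (edge_label x c))"
    have i0: "i0 < length t" "t ! i0 = x" using edge_label_I[OF x] unfolding i0_def t_def by auto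
    have arR: "ar R = length t" using wf_cons(3)[OF wX c] unfolding R_def t_def by simp
    have lR: "snd (edge_label x c) = R" unfolding edge_label_def R_def by simp
    have 1: "P (Inr c) h = 0" if "h \<notin> rels A R" for h
    proof (cases "h \<in> tuples ?B (length t) \<and> cmpt t h")
      case True
      then have f: "fun_of t h \<in> set t \<rightarrow>\<^sub>E ?B" using fun_of_PiE by blast
      have "map (fun_of t h) t = h" using True map_fun_of by blast
      then have "q c (fun_of t h) = 0" using qz[OF c] f that unfolding t_def R_def by simp
      then show ?thesis using True unfolding P_def enc_def t_def by simp
    qed (auto simp: P_def enc_def t_def)
    have 2: "P (Inr c) h = 0" if "\<not> eq_on (fst (edge_label x c)) h" for h
    proof -
      have "\<not> cmpt t h" using cmpt_eq_on[of c h x] that unfolding t_def by blast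
      then show ?thesis unfolding P_def enc_def t_def by simp
    qed
    have 3: "P (Inl x) h' = (\<Sum>h\<in>{h\<in>tuples ?B (ar R). proj [i0] h = h'}. P (Inr c) h)" for h'
    proof -
      have si: "set [i0] \<subseteq> {..<length t}" using i0 by simp
      have pt: "proj [i0] t = [x]" using proj_single[OF i0(1)] i0(2) by simp
      have "(\<Sum>h\<in>{h\<in>tuples ?B (ar R). proj [i0] h = h'}. P (Inr c) h)
          = (\<Sum>h\<in>{h\<in>tuples ?B (length t). proj [i0] h = h'}. enc ?B t (q c) h)"
        unfolding P_def arR t_def by simp
      also have "\<dots> = (if h' \<in> tuples ?B (length [i0]) \<and> cmpt (proj [i0] t) h'
          then (\<Sum>g\<in>{g \<in> set t \<rightarrow>\<^sub>E ?B. restrict g (set (proj [i0] t)) = fun_of (proj [i0] t) h'}. q c g)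
          else 0)" by (rule marg_enc[OF finB si])
      also have "\<dots> = (if h' \<in> tuples ?B (length [x]) \<and> cmpt [x] h'
          then (\<Sum>g\<in>{g \<in> set t \<rightarrow>\<^sub>E ?B. restrict g {x} = fun_of [x] h'}. q c g)
          else 0)" unfolding pt by simp
      also have "\<dots> = P (Inl x) h'"
      proof (cases "h' \<in> tuples ?B (length [x]) \<and> cmpt [x] h'")
        case True
        then have f: "fun_of [x] h' \<in> {x} \<rightarrow>\<^sub>E ?B" using fun_of_PiE[of h' ?B "[x]"] by simp
        have "p {x} (fun_of [x] h') = (\<Sum>g\<in>{g \<in> set t \<rightarrow>\<^sub>E ?B. restrict g {x} = fun_of [x] h'}. q c g)"
          using qm[OF c, of "{x}" "fun_of [x] h'"] f x unfolding t_def by simp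
        then show ?thesis using True unfolding P_def enc_def by simp
      qed (auto simp: P_def enc_def)
      finally show ?thesis by simp
    qed
    show ?thesis unfolding Lam1_def lR using 1 2 3 unfolding i0_def by blast
  qed
  show ?thesis using Psi Lam by blast
qed



lemma cmpt_zero_from_edges:
  assumes len: "length h = length t"
    and nc: "\<not> cmpt t h"
  obtains y where "y \<in> set t" "\<not> eq_on (fst (edge_label y (R, t))) h"
proof -
  obtain i j where ij: "i < length t" "j < length t" "t!i = t!j" "h!i \<noteq> h!j"
    using nc len unfolding cmpt_def by blast
  have "t!i \<in> set t" using ij by simp
  moreover have "\<not> eq_on (fst (edge_label (t!i) (R, t))) h"
    using ij unfolding eq_on_def edge_label_def by auto
  ultimately show ?thesis using that by blast
qed

lemma dec1:
  fixes X :: "('x, 'r) struc" and A :: "('a, 'r) struc"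
  assumes sig: "wf_sig sig ar" and wX: "wf_struc sig ar X" and wA: "wf_struc sig ar A"
    and PPsi: "\<forall>v\<in>fg_vertices sig X. Psi1 (univ A) (isl v) (P v)"
    and PLam: "\<forall>c\<in>constraints sig X. \<forall>a\<in>set (snd c). Lam1 A ar (edge_label a c) (P (Inl a)) (P (Inr c))"
  shows "SA_feasible sig 1 X A"
proof -
  let ?B = "univ A"
  have finB: "finite ?B" using wA unfolding wf_struc_def by simp
  have finX: "finite (univ X)" using wX unfolding wf_struc_def by simp
  define p where "p V f = P (Inl (the_elem V)) [f (the_elem V)]" for V and f :: "'x \<Rightarrow> 'a"
  define q where "q c f = P (Inr c) (map f (snd c))" for c and f :: "'x \<Rightarrow> 'a"
  have Px: "Psi1 ?B True (P (Inl x))" if "x \<in> univ X" for x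
  proof -
    have "Inl x \<in> fg_vertices sig X" using that unfolding fg_vertices_def by simp
    then have "Psi1 ?B (isl (Inl x :: 'x + 'r \<times> 'x list)) (P (Inl x))" using PPsi by blast
    then show ?thesis by simp
  qed
  have Pc: "Psi1 ?B False (P (Inr c))" if "c \<in> constraints sig X" for c
  proof -
    have "Inr c \<in> fg_vertices sig X" using that unfolding fg_vertices_def by simp
    then have "Psi1 ?B (isl (Inr c :: 'x + 'r \<times> 'x list)) (P (Inr c))" using PPsi by blast
    then show ?thesis by simp
  qed
  have sing: "\<exists>x. V = {x} \<and> x \<in> univ X" if "V \<subseteq> univ X" "1 \<le> card V" "card V \<le> 1" for V
  proof -
    have "finite V" using that finX finite_subset by blast
    then have "card V = 1" using that by simp
    then obtain x where "V = {x}" by (rule card_1_singletonE)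
    then show ?thesis using that by auto
  qed
  have C1: "\<forall>V f. V \<subseteq> univ X \<and> 1 \<le> card V \<and> card V \<le> 1 \<and> f \<in> V \<rightarrow>\<^sub>E univ A
              \<longrightarrow> 0 \<le> p V f \<and> p V f \<le> 1"
  proof (intro allI impI)
    fix V f assume a: "V \<subseteq> univ X \<and> 1 \<le> card V \<and> card V \<le> 1 \<and> f \<in> V \<rightarrow>\<^sub>E univ A"
    then have "V \<subseteq> univ X" "1 \<le> card V" "card V \<le> 1" by auto
    from sing[OF this] obtain x where x: "V = {x}" "x \<in> univ X" by blast
    show "0 \<le> p V f \<and> p V f \<le> 1" using Px[OF x(2)] unfolding p_def x Psi1_def by simp
  qed
  have C2: "\<forall>c\<in>constraints sig X. \<forall>f \<in> set (snd c) \<rightarrow>\<^sub>E univ A. 0 \<le> q c f \<and> q c f \<le> 1"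
    using Pc unfolding q_def Psi1_def by blast
  have C3: "\<forall>V. V \<subseteq> univ X \<and> 1 \<le> card V \<and> card V \<le> 1
              \<longrightarrow> (\<Sum>f \<in> V \<rightarrow>\<^sub>E univ A. p V f) = 1"
  proof (intro allI impI)
    fix V assume a: "V \<subseteq> univ X \<and> 1 \<le> card V \<and> card V \<le> 1"
    then have "V \<subseteq> univ X" "1 \<le> card V" "card V \<le> 1" by auto
    from sing[OF this] obtain x where x: "V = {x}" "x \<in> univ X" by blast
    have ps: "Psi1 ?B True (P (Inl x))" using Px[OF x(2)] .
    have "(\<Sum>h\<in>tuples ?B (length [x]). P (Inl x) h) = (\<Sum>f\<in>set [x] \<rightarrow>\<^sub>E ?B. P (Inl x) (map f [x]))"
      by (rule sum_cmpt[OF finB]) (auto simp: tuples_def cmpt_def)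
    then have "(\<Sum>f\<in>{x} \<rightarrow>\<^sub>E ?B. P (Inl x) [f x]) = (\<Sum>h\<in>tuples ?B 1. P (Inl x) h)" by simp
    also have "\<dots> = 1" using ps unfolding Psi1_def by simp
    finally show "(\<Sum>f \<in> V \<rightarrow>\<^sub>E univ A. p V f) = 1" unfolding p_def x by simp
  qed
  have C4: "\<forall>U V f. U \<noteq> {} \<and> U \<subseteq> V \<and> V \<subseteq> univ X \<and> card V \<le> 1 \<and> f \<in> U \<rightarrow>\<^sub>E univ A
              \<longrightarrow> p U f = (\<Sum>g \<in> {g \<in> V \<rightarrow>\<^sub>E univ A. restrict g U = f}. p V g)"
  proof (intro allI impI)
    fix U V f assume a: "U \<noteq> {} \<and> U \<subseteq> V \<and> V \<subseteq> univ X \<and> card V \<le> 1 \<and> f \<in> U \<rightarrow>\<^sub>E univ A"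
    have fV: "finite V" using a finX finite_subset by blast
    have "V \<noteq> {}" using a by blast
    then have "1 \<le> card V" using fV by (simp add: Suc_le_eq card_gt_0_iff)
    moreover have "V \<subseteq> univ X" "card V \<le> 1" using a by auto
    ultimately obtain x where x: "V = {x}" "x \<in> univ X" using sing by blast
    have U: "U = {x}" using a x by blast
    have "{g \<in> V \<rightarrow>\<^sub>E univ A. restrict g U = f} = {f}"
      unfolding U x(1) by (rule PiE_single_restrict) (use a U in simp)
    then show "p U f = (\<Sum>g \<in> {g \<in> V \<rightarrow>\<^sub>E univ A. restrict g U = f}. p V g)"
      using U x by simp
  qed
  have Gz: "P (Inr c) h = 0" if c: "c \<in> constraints sig X" and h: "h \<in> tuples ?B (length (snd c))"
    and nc: "\<not> cmpt (snd c) h" for c h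
  proof -
    have len: "length h = length (snd c)" using h unfolding tuples_def by simp
    obtain y where y: "y \<in> set (snd c)" "\<not> eq_on (fst (edge_label y (fst c, snd c))) h"
      by (rule cmpt_zero_from_edges[OF len nc])
    have "Lam1 A ar (edge_label y c) (P (Inl y)) (P (Inr c))" using PLam c y(1) by blast
    then show ?thesis using y(2) unfolding Lam1_def by simp
  qed
  have C5: "\<forall>c\<in>constraints sig X. \<forall>U f. U \<noteq> {} \<and> U \<subseteq> set (snd c) \<and> card U \<le> 1 \<and> f \<in> U \<rightarrow>\<^sub>E univ A
              \<longrightarrow> p U f = (\<Sum>g \<in> {g \<in> set (snd c) \<rightarrow>\<^sub>E univ A. restrict g U = f}. q c g)"
  proof (intro ballI allI impI)
    fix c U f assume c: "c \<in> constraints sig X"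
      and a: "U \<noteq> {} \<and> U \<subseteq> set (snd c) \<and> card U \<le> 1 \<and> f \<in> U \<rightarrow>\<^sub>E univ A"
    have "set (snd c) \<subseteq> univ X" using wf_cons(4)[OF wX c] .
    then have UX: "U \<subseteq> univ X" using a by blast
    have "finite (set (snd c))" by simp
    then have fU: "finite U" using a finite_subset by auto
    then have "1 \<le> card U" using a by (simp add: Suc_le_eq card_gt_0_iff)
    moreover have "card U \<le> 1" using a by auto
    ultimately obtain x where x: "U = {x}" "x \<in> univ X" using sing UX by blast
    define t where "t = snd c"
    define R where "R = fst c"
    have xt: "x \<in> set t" using a x unfolding t_def by blast
    define i0 where "i0 = (LEAST i. i \<in> fst (edge_label x c))"
    have i0: "i0 < length t" "t ! i0 = x" using edge_label_I[OF xt[unfolded t_def]] unfolding i0_def t_def by auto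
    have arR: "ar R = length t" using wf_cons(3)[OF wX c] unfolding R_def t_def by simp
    have L: "Lam1 A ar (edge_label x c) (P (Inl x)) (P (Inr c))" using PLam c xt unfolding t_def by blast
    have lR: "snd (edge_label x c) = R" unfolding edge_label_def R_def by simp
    have 1: "P (Inl x) [f x] = (\<Sum>h\<in>{h\<in>tuples ?B (length t). proj [i0] h = [f x]}. P (Inr c) h)"
    proof -
      have "\<forall>h'. P (Inl x) h' = (\<Sum>h\<in>{h\<in>tuples ?B (ar (snd (edge_label x c))). proj [LEAST i. i \<in> fst (edge_label x c)] h = h'}. P (Inr c) h)"
        using L unfolding Lam1_def by (elim conjE)
      then show ?thesis unfolding lR arR i0_def by (rule allE)
    qed
    have si: "set [i0] \<subseteq> {..<length t}" using i0 by simp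
    have pt: "proj [i0] t = [x]" using proj_single[OF i0(1)] i0(2) by simp
    have fx: "f \<in> set (proj [i0] t) \<rightarrow>\<^sub>E ?B" using a x pt by simp
    have "(\<Sum>h\<in>{h\<in>tuples ?B (length t). proj [i0] h = map f (proj [i0] t)}. P (Inr c) h)
        = (\<Sum>g\<in>{g \<in> set t \<rightarrow>\<^sub>E ?B. restrict g (set (proj [i0] t)) = f}. P (Inr c) (map g t))"
      by (rule marg_sum[OF finB _ si fx]) (use Gz c in \<open>auto simp: t_def\<close>)
    then show "p U f = (\<Sum>g \<in> {g \<in> set (snd c) \<rightarrow>\<^sub>E univ A. restrict g U = f}. q c g)"
      using 1 pt unfolding p_def q_def x t_def by simp
  qed
  have C6: "\<forall>c\<in>constraints sig X. \<forall>f \<in> set (snd c) \<rightarrow>\<^sub>E univ A.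
              map f (snd c) \<notin> rels A (fst c) \<longrightarrow> q c f = 0"
  proof (intro ballI impI)
    fix c f assume c: "c \<in> constraints sig X" and nr: "map f (snd c) \<notin> rels A (fst c)"
    have "snd c \<noteq> []" using wf_cons_ne[OF sig wX c] .
    then have y: "hd (snd c) \<in> set (snd c)" by simp
    have "Lam1 A ar (edge_label (hd (snd c)) c) (P (Inl (hd (snd c)))) (P (Inr c))" using PLam c y by blast
    then show "q c f = 0" using nr unfolding Lam1_def q_def edge_label_def by simp
  qed
  show ?thesis unfolding SA_feasible_def
    apply (rule exI[of _ p], rule exI[of _ q])
    using C1 C2 C3 C4 C5 C6 by (intro conjI) assumption+
qed

lemma dir1:
  fixes X :: "('x, 'r) struc" and X' :: "('y, 'r) struc" and A :: "('a, 'r) struc"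
  assumes sig: "wf_sig sig ar" and wX: "wf_struc sig ar X" and wX': "wf_struc sig ar X'"
    and wA: "wf_struc sig ar A" and eq: "equiv1 sig X X'" and sa: "SA_feasible sig 1 X A"
  shows "SA_feasible sig 1 X' A"
proof -
  have finB: "finite (univ A)" using wA unfolding wf_struc_def by simp
  obtain P where P: "\<forall>v\<in>fg_vertices sig X. Psi1 (univ A) (isl v) (P v)"
     "\<forall>c\<in>constraints sig X. \<forall>a\<in>set (snd c). Lam1 A ar (edge_label a c) (P (Inl a)) (P (Inr c))"
    using enc1[OF sig wX wA sa] by blast
  have "\<exists>P'::'y + 'r \<times> 'y list \<Rightarrow> 'a list \<Rightarrow> rat. (\<forall>v\<in>fg_vertices sig X'. Psi1 (univ A) (isl v) (P' v)) \<and>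
           (\<forall>c\<in>constraints sig X'. \<forall>a\<in>set (snd c). Lam1 A ar (edge_label a c) (P' (Inl a)) (P' (Inr c)))"
  proof (rule transfer[where Y = X and P = P])
    show "finite (univ X)" using wX unfolding wf_struc_def by simp
    show "finite (univ X')" using wX' unfolding wf_struc_def by simp
    show "finite (constraints sig X)" using finite_cons[OF sig wX] .
    show "finite (constraints sig X')" using finite_cons[OF sig wX'] .
    show "\<forall>c\<in>constraints sig X. snd c \<noteq> [] \<and> set (snd c) \<subseteq> univ X"
      using wf_cons_ne[OF sig wX] wf_cons(4)[OF wX] by blast
    show "\<forall>c\<in>constraints sig X'. snd c \<noteq> [] \<and> set (snd c) \<subseteq> univ X'"
      using wf_cons_ne[OF sig wX'] wf_cons(4)[OF wX'] by blast
    show "equiv1 sig X X'" by (rule eq)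
    show "\<And>b S F. finite S \<Longrightarrow> S \<noteq> {} \<Longrightarrow> \<forall>i\<in>S. Psi1 (univ A) b (F i) \<Longrightarrow> Psi1 (univ A) b (avg F S)"
      by (rule Psi1_conv[OF finB])
    show "\<And>l S F G. finite S \<Longrightarrow> S \<noteq> {} \<Longrightarrow> \<forall>i\<in>S. Lam1 A ar l (F i) (G i) \<Longrightarrow> Lam1 A ar l (avg F S) (avg G S)"
      by (rule Lam1_conv[OF finB])
    show "\<forall>v\<in>fg_vertices sig X. Psi1 (univ A) (isl v) (P v)" by (rule P(1))
    show "\<forall>c\<in>constraints sig X. \<forall>a\<in>set (snd c). Lam1 A ar (edge_label a c) (P (Inl a)) (P (Inr c))" by (rule P(2))
  qed
  then obtain P' :: "'y + 'r \<times> 'y list \<Rightarrow> 'a list \<Rightarrow> rat" where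
    "\<forall>v\<in>fg_vertices sig X'. Psi1 (univ A) (isl v) (P' v)"
    "\<forall>c\<in>constraints sig X'. \<forall>a\<in>set (snd c). Lam1 A ar (edge_label a c) (P' (Inl a)) (P' (Inr c))"
    by blast
  then show ?thesis using dec1[OF sig wX' wA] by blast
qed



lemma ksig_TS: "TS j S \<in> ksig sig ar k \<longleftrightarrow> 1 \<le> j \<and> j \<le> k \<and> S \<subseteq> {..<j}"
  unfolding ksig_def by auto
lemma ksig_RS: "RS R S \<in> ksig sig ar k \<longleftrightarrow> R \<in> sig \<and> S \<subseteq> {..<ar R}"
  unfolding ksig_def by auto
lemma ksig_Ti: "Ti j i \<in> ksig sig ar k \<longleftrightarrow> 1 \<le> j \<and> j \<le> k \<and> 1 \<le> length i \<and> length i \<le> k \<and> set i \<subseteq> {..<j}"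
  unfolding ksig_def by auto
lemma ksig_Ri: "Ri R i \<in> ksig sig ar k \<longleftrightarrow> R \<in> sig \<and> 1 \<le> length i \<and> length i \<le> k \<and> set i \<subseteq> {..<ar R}"
  unfolding ksig_def by auto

lemma kpow_univ: "univ (kpow sig k X) = Inl ` (\<Union>j\<in>{1..k}. tuples (univ X) j) \<union> Inr ` constraints sig X"
  unfolding kpow_def by simp

lemma kpow_rels_eq: "rels (kpow sig k X) = kpow_rels X"
  unfolding kpow_def by simp

lemma kcons_iff: "(S, l) \<in> constraints (ksig sig ar k) (kpow sig k X) \<longleftrightarrow> S \<in> ksig sig ar k \<and> l \<in> kpow_rels X S"
  unfolding constraints_def kpow_rels_eq by auto

lemma finite_lists_le: "finite {i :: nat list. set i \<subseteq> {..<n} \<and> length i \<le> k}"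
  using finite_lists_length_le[of "{..<n}" k] by simp

lemma finite_ksig:
  assumes "finite sig"
  shows "finite (ksig sig ar k)"
proof -
  have 1: "{TS j S | j S. 1 \<le> j \<and> j \<le> k \<and> S \<subseteq> {..<j}} \<subseteq> (\<lambda>(j,S). TS j S) ` ({..k} \<times> Pow {..<k})"
  proof
    fix x assume "x \<in> {TS j S | j S. 1 \<le> j \<and> j \<le> k \<and> S \<subseteq> {..<j}}"
    then obtain j S where "x = TS j S" "j \<le> k" "S \<subseteq> {..<j}" by blast
    moreover have "S \<subseteq> {..<k}" using calculation by auto
    ultimately show "x \<in> (\<lambda>(j,S). TS j S) ` ({..k} \<times> Pow {..<k})" by (auto simp: image_iff)
  qed
  have 2: "{RS R S | R S. R \<in> sig \<and> S \<subseteq> {..<ar R}} \<subseteq> (\<Union>R\<in>sig. RS R ` Pow {..<ar R})"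
    by auto
  have 3: "{Ti j i | j i. 1 \<le> j \<and> j \<le> k \<and> 1 \<le> length i \<and> length i \<le> k \<and> set i \<subseteq> {..<j}}
       \<subseteq> (\<lambda>(j,i). Ti j i) ` ({..k} \<times> {i. set i \<subseteq> {..<k} \<and> length i \<le> k})"
  proof
    fix x assume "x \<in> {Ti j i | j i. 1 \<le> j \<and> j \<le> k \<and> 1 \<le> length i \<and> length i \<le> k \<and> set i \<subseteq> {..<j}}"
    then obtain j i where "x = Ti j i" "j \<le> k" "length i \<le> k" "set i \<subseteq> {..<j}" by blast
    moreover have "set i \<subseteq> {..<k}" using calculation by auto
    ultimately show "x \<in> (\<lambda>(j,i). Ti j i) ` ({..k} \<times> {i. set i \<subseteq> {..<k} \<and> length i \<le> k})" by (auto simp: image_iff)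
  qed
  have 4: "{Ri R i | R i. R \<in> sig \<and> 1 \<le> length i \<and> length i \<le> k \<and> set i \<subseteq> {..<ar R}}
       \<subseteq> (\<Union>R\<in>sig. Ri R ` {i. set i \<subseteq> {..<ar R} \<and> length i \<le> k})"
    by auto
  have f1: "finite ((\<lambda>(j,S). TS j S) ` ({..k} \<times> Pow {..<k}))" by simp
  have f2: "finite (\<Union>R\<in>sig. RS R ` Pow {..<ar R})" using assms by simp
  have f3: "finite ((\<lambda>(j,i). Ti j i) ` ({..k} \<times> {i. set i \<subseteq> {..<k} \<and> length i \<le> k}))"
    using finite_lists_le by simp
  have f4: "finite (\<Union>R\<in>sig. Ri R ` {i. set i \<subseteq> {..<ar R} \<and> length i \<le> k})"
    using assms finite_lists_le by simp
  show ?thesis unfolding ksig_def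
    using finite_subset[OF 1 f1] finite_subset[OF 2 f2] finite_subset[OF 3 f3] finite_subset[OF 4 f4]
    by simp
qed

lemma finite_kpow_rels:
  assumes "wf_struc sig ar X" "S \<in> ksig sig ar k"
  shows "finite (kpow_rels X S)"
proof -
  have fX: "finite (univ X)" using assms(1) unfolding wf_struc_def by simp
  have fR: "finite (rels X R)" if "R \<in> sig" for R
  proof -
    have "rels X R \<subseteq> tuples (univ X) (ar R)"
    proof
      fix a assume "a \<in> rels X R"
      then show "a \<in> tuples (univ X) (ar R)" using rels_tuples[OF assms(1) that] by blast
    qed
    moreover have "finite (tuples (univ X) (ar R))" by (rule finite_tuples[OF fX])
    ultimately show ?thesis by (rule finite_subset)
  qed
  show ?thesis
  proof (cases S)
    case (TS j S')
    have sub: "kpow_rels X S \<subseteq> (\<lambda>a. [Inl a]) ` tuples (univ X) j" unfolding TS by auto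
    have "finite ((\<lambda>a. [Inl a]) ` tuples (univ X) j)" by (rule finite_imageI[OF finite_tuples[OF fX]])
    with sub show ?thesis by (rule finite_subset)
  next
    case (RS R S')
    have sub: "kpow_rels X S \<subseteq> (\<lambda>a. [Inr (R, a)]) ` rels X R" unfolding RS by auto
    have R: "R \<in> sig" using assms(2) unfolding RS ksig_RS by simp
    have "finite ((\<lambda>a. [Inr (R, a)]) ` rels X R)" by (rule finite_imageI[OF fR[OF R]])
    with sub show ?thesis by (rule finite_subset)
  next
    case (Ti j i)
    have sub: "kpow_rels X S \<subseteq> (\<lambda>a. [Inl a, Inl (proj i a)]) ` tuples (univ X) j" unfolding Ti by auto
    have "finite ((\<lambda>a. [Inl a, Inl (proj i a)]) ` tuples (univ X) j)" by (rule finite_imageI[OF finite_tuples[OF fX]])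
    with sub show ?thesis by (rule finite_subset)
  next
    case (Ri R i)
    have sub: "kpow_rels X S \<subseteq> (\<lambda>a. [Inr (R, a), Inl (proj i a)]) ` rels X R" unfolding Ri by auto
    have R: "R \<in> sig" using assms(2) unfolding Ri ksig_Ri by simp
    have "finite ((\<lambda>a. [Inr (R, a), Inl (proj i a)]) ` rels X R)" by (rule finite_imageI[OF fR[OF R]])
    with sub show ?thesis by (rule finite_subset)
  qed
qed

lemma kpow_univ_Inl: "a \<in> tuples (univ X) j \<Longrightarrow> 1 \<le> j \<Longrightarrow> j \<le> k \<Longrightarrow> Inl a \<in> univ (kpow sig k X)"
  unfolding kpow_univ by (intro UnI1 imageI UN_I[of j]) auto

lemma kpow_univ_Inr: "c \<in> constraints sig X \<Longrightarrow> Inr c \<in> univ (kpow sig k X)"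
  unfolding kpow_univ by simp

lemma kpow_fact_wf:
  fixes X :: "('x, 'r) struc"
  assumes wX: "wf_struc sig ar X" and c: "(S, l) \<in> constraints (ksig sig ar k) (kpow sig k X)"
  shows "l \<noteq> [] \<and> set l \<subseteq> univ (kpow sig k X)"
proof -
  have S: "S \<in> ksig sig ar k" using c unfolding kcons_iff by simp
  have l: "l \<in> kpow_rels X S" using c unfolding kcons_iff by simp
  show ?thesis
  proof (cases S)
    case (TS j S')
    obtain a where a: "l = [Inl a]" "a \<in> tuples (univ X) j" using l unfolding TS by auto
    have j: "1 \<le> j" "j \<le> k" using S unfolding TS ksig_TS by simp_all
    have "Inl a \<in> univ (kpow sig k X)" by (rule kpow_univ_Inl[OF a(2) j])
    then show ?thesis using a by simp
  next
    case (RS R S')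
    obtain a where a: "l = [Inr (R, a)]" "a \<in> rels X R" using l unfolding RS by auto
    have R: "R \<in> sig" using S unfolding RS ksig_RS by simp
    have "(R, a) \<in> constraints sig X" using a R unfolding constraints_def by simp
    then have "Inr (R, a) \<in> univ (kpow sig k X)" by (rule kpow_univ_Inr)
    then show ?thesis using a by simp
  next
    case (Ti j i)
    obtain a where a: "l = [Inl a, Inl (proj i a)]" "a \<in> tuples (univ X) j" using l unfolding Ti by auto
    have ji: "1 \<le> j" "j \<le> k" "1 \<le> length i" "length i \<le> k" "set i \<subseteq> {..<j}"
      using S unfolding Ti ksig_Ti by simp_all
    have pt: "proj i a \<in> tuples (univ X) (length i)" by (rule proj_tuples[OF a(2) ji(5)])
    have "Inl (proj i a) \<in> univ (kpow sig k X)" by (rule kpow_univ_Inl[OF pt ji(3) ji(4)])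
    moreover have "Inl a \<in> univ (kpow sig k X)" by (rule kpow_univ_Inl[OF a(2) ji(1) ji(2)])
    ultimately show ?thesis using a by simp
  next
    case (Ri R i)
    obtain a where a: "l = [Inr (R, a), Inl (proj i a)]" "a \<in> rels X R" using l unfolding Ri by auto
    have ji: "R \<in> sig" "1 \<le> length i" "length i \<le> k" "set i \<subseteq> {..<ar R}"
      using S unfolding Ri ksig_Ri by simp_all
    have at: "a \<in> tuples (univ X) (ar R)" by (rule rels_tuples[OF wX ji(1) a(2)])
    have pt: "proj i a \<in> tuples (univ X) (length i)" by (rule proj_tuples[OF at ji(4)])
    have "(R, a) \<in> constraints sig X" using a ji unfolding constraints_def by simp
    then have "Inr (R, a) \<in> univ (kpow sig k X)" by (rule kpow_univ_Inr)
    moreover have "Inl (proj i a) \<in> univ (kpow sig k X)" by (rule kpow_univ_Inl[OF pt ji(2) ji(3)])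
    ultimately show ?thesis using a by simp
  qed
qed

lemma kpow_wf:
  fixes X :: "('x, 'r) struc"
  assumes sig: "wf_sig sig ar" and wX: "wf_struc sig ar X"
  shows "finite (univ (kpow sig k X))" "finite (constraints (ksig sig ar k) (kpow sig k X))"
    "\<forall>c\<in>constraints (ksig sig ar k) (kpow sig k X). snd c \<noteq> [] \<and> set (snd c) \<subseteq> univ (kpow sig k X)"
proof -
  have fX: "finite (univ X)" using wX unfolding wf_struc_def by simp
  show "finite (univ (kpow sig k X))" unfolding kpow_univ
    using finite_tuples[OF fX] finite_cons[OF sig wX] by simp
  have fs: "finite (ksig sig ar k)" using sig unfolding wf_sig_def by (intro finite_ksig) simp
  have "constraints (ksig sig ar k) (kpow sig k X) = Sigma (ksig sig ar k) (kpow_rels X)"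
    unfolding constraints_def kpow_rels_eq by auto
  then show "finite (constraints (ksig sig ar k) (kpow sig k X))"
    using fs finite_kpow_rels[OF wX] by simp
  show "\<forall>c\<in>constraints (ksig sig ar k) (kpow sig k X). snd c \<noteq> [] \<and> set (snd c) \<subseteq> univ (kpow sig k X)"
  proof
    fix c assume c: "c \<in> constraints (ksig sig ar k) (kpow sig k X)"
    obtain S l where Sl: "c = (S, l)" by (cases c)
    show "snd c \<noteq> [] \<and> set (snd c) \<subseteq> univ (kpow sig k X)"
      using kpow_fact_wf[OF wX c[unfolded Sl]] Sl by simp
  qed
qed



definition Lam2 :: "('a, 'r) struc \<Rightarrow> ('r \<Rightarrow> nat) \<Rightarrow> nat set \<times> 'r ksym \<Rightarrow> ('a list \<Rightarrow> rat) \<Rightarrow> ('a list \<Rightarrow> rat) \<Rightarrow> bool" where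
  "Lam2 A ar l F G = (case snd l of
     TS j S \<Rightarrow> (\<forall>h. 0 \<le> F h \<and> F h \<le> 1) \<and> (\<forall>h. h \<notin> tuples (univ A) j \<longrightarrow> F h = 0)
               \<and> (\<forall>h. \<not> eq_on S h \<longrightarrow> F h = 0) \<and> (\<Sum>h\<in>tuples (univ A) j. F h) = 1
   | RS R S \<Rightarrow> (\<forall>h. 0 \<le> F h \<and> F h \<le> 1) \<and> (\<forall>h. h \<notin> rels A R \<longrightarrow> F h = 0) \<and> (\<forall>h. \<not> eq_on S h \<longrightarrow> F h = 0)
   | Ti j i \<Rightarrow> (0 \<in> fst l \<longrightarrow> G = F) \<and>
               (1 \<in> fst l \<longrightarrow> (\<forall>h'. F h' = (\<Sum>h\<in>{h\<in>tuples (univ A) j. proj i h = h'}. G h)))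
   | Ri R i \<Rightarrow> (0 \<in> fst l \<longrightarrow> G = F) \<and>
               (1 \<in> fst l \<longrightarrow> (\<forall>h'. F h' = (\<Sum>h\<in>{h\<in>tuples (univ A) (ar R). proj i h = h'}. G h))))"

lemma Lam2_conv:
  assumes finB: "finite (univ A)" and S: "finite S" "S \<noteq> {}" and L: "\<forall>x\<in>S. Lam2 A ar l (F x) (G x)"
  shows "Lam2 A ar l (avg F S) (avg G S)"
proof -
  obtain I sy where l: "l = (I, sy)" by (cases l)
  show ?thesis
  proof (cases sy)
    case (TS j S')
    have L': "\<forall>x\<in>S. (\<forall>h. 0 \<le> F x h \<and> F x h \<le> 1) \<and> (\<forall>h. h \<notin> tuples (univ A) j \<longrightarrow> F x h = 0)
               \<and> (\<forall>h. \<not> eq_on S' h \<longrightarrow> F x h = 0) \<and> (\<Sum>h\<in>tuples (univ A) j. F x h) = 1"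
      using L unfolding Lam2_def l TS by simp
    have 1: "\<forall>h. 0 \<le> avg F S h \<and> avg F S h \<le> 1" using L' S by (intro allI avg_bounds) auto
    have 2: "\<forall>h. h \<notin> tuples (univ A) j \<longrightarrow> avg F S h = 0" using L' by (auto intro!: avg_zero)
    have 3: "\<forall>h. \<not> eq_on S' h \<longrightarrow> avg F S h = 0" using L' by (auto intro!: avg_zero)
    have 4: "(\<Sum>h\<in>tuples (univ A) j. avg F S h) = 1"
      using L' S by (intro avg_sum_const) (auto simp: finite_tuples[OF finB])
    show ?thesis unfolding Lam2_def l TS using 1 2 3 4 by simp
  next
    case (RS R S')
    have L': "\<forall>x\<in>S. (\<forall>h. 0 \<le> F x h \<and> F x h \<le> 1) \<and> (\<forall>h. h \<notin> rels A R \<longrightarrow> F x h = 0)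
               \<and> (\<forall>h. \<not> eq_on S' h \<longrightarrow> F x h = 0)"
      using L unfolding Lam2_def l RS by simp
    have 1: "\<forall>h. 0 \<le> avg F S h \<and> avg F S h \<le> 1" using L' S by (intro allI avg_bounds) auto
    have 2: "\<forall>h. h \<notin> rels A R \<longrightarrow> avg F S h = 0" using L' by (auto intro!: avg_zero)
    have 3: "\<forall>h. \<not> eq_on S' h \<longrightarrow> avg F S h = 0" using L' by (auto intro!: avg_zero)
    show ?thesis unfolding Lam2_def l RS using 1 2 3 by simp
  next
    case (Ti j i)
    have L': "\<forall>x\<in>S. (0 \<in> I \<longrightarrow> G x = F x) \<and> (1 \<in> I \<longrightarrow> (\<forall>h'. F x h' = (\<Sum>h\<in>{h\<in>tuples (univ A) j. proj i h = h'}. G x h)))"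
      using L unfolding Lam2_def l Ti by simp
    have 1: "0 \<in> I \<longrightarrow> avg G S = avg F S" using L' by (auto intro!: avg_eq)
    have 2: "1 \<in> I \<longrightarrow> (\<forall>h'. avg F S h' = (\<Sum>h\<in>{h\<in>tuples (univ A) j. proj i h = h'}. avg G S h))"
      using L' S by (auto intro!: avg_lin simp: finite_tuples[OF finB])
    show ?thesis unfolding Lam2_def l Ti using 1 2 by simp
  next
    case (Ri R i)
    have L': "\<forall>x\<in>S. (0 \<in> I \<longrightarrow> G x = F x) \<and> (1 \<in> I \<longrightarrow> (\<forall>h'. F x h' = (\<Sum>h\<in>{h\<in>tuples (univ A) (ar R). proj i h = h'}. G x h)))"
      using L unfolding Lam2_def l Ri by simp
    have 1: "0 \<in> I \<longrightarrow> avg G S = avg F S" using L' by (auto intro!: avg_eq)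
    have 2: "1 \<in> I \<longrightarrow> (\<forall>h'. avg F S h' = (\<Sum>h\<in>{h\<in>tuples (univ A) (ar R). proj i h = h'}. avg G S h))"
      using L' S by (auto intro!: avg_lin simp: finite_tuples[OF finB])
    show ?thesis unfolding Lam2_def l Ri using 1 2 by simp
  qed
qed

lemma eq_on_cmpt:
  assumes "cmpt t h" "eq_on S t" "S \<subseteq> {..<length t}"
  shows "eq_on S h"
  unfolding eq_on_def
proof (intro ballI)
  fix i i' assume ii: "i \<in> S" "i' \<in> S"
  then have lt: "i < length t" "i' < length t" using assms(3) by auto
  have "t!i = t!i'" using assms(2) ii unfolding eq_on_def by blast
  then show "h!i = h!i'" using assms(1) lt unfolding cmpt_def by blast
qed

lemma marg_from_SA:
  assumes finB: "finite B" and i: "set i \<subseteq> {..<length t}"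
    and HM: "\<And>h'. h' \<in> tuples B (length i) \<Longrightarrow> cmpt (proj i t) h' \<Longrightarrow>
       Fs (fun_of (proj i t) h') = (\<Sum>g\<in>{g \<in> set t \<rightarrow>\<^sub>E B. restrict g (set (proj i t)) = fun_of (proj i t) h'}. Ft g)"
  shows "enc B (proj i t) Fs h' = (\<Sum>h\<in>{h\<in>tuples B (length t). proj i h = h'}. enc B t Ft h)"
proof -
  have len: "length (proj i t) = length i" unfolding proj_def by simp
  have "(\<Sum>h\<in>{h\<in>tuples B (length t). proj i h = h'}. enc B t Ft h) =
     (if h' \<in> tuples B (length i) \<and> cmpt (proj i t) h'
          then (\<Sum>g\<in>{g \<in> set t \<rightarrow>\<^sub>E B. restrict g (set (proj i t)) = fun_of (proj i t) h'}. Ft g)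
          else 0)" by (rule marg_enc[OF finB i])
  also have "\<dots> = enc B (proj i t) Fs h'"
    unfolding enc_def len using HM by simp
  finally show ?thesis by simp
qed

lemma card_set_bounds:
  assumes "t \<noteq> []"
  shows "1 \<le> card (set t)" "card (set t) \<le> length t"
proof -
  have "set t \<noteq> {}" using assms by simp
  then show "1 \<le> card (set t)" by (simp add: Suc_le_eq card_gt_0_iff)
  show "card (set t) \<le> length t" by (rule card_length)
qed

lemma edge_label_kpow:
  assumes "n \<in> fst (edge_label w e)"
  shows "n < length (snd e)" "snd e ! n = w"
  using assms unfolding edge_label_def by auto



lemma enc_bounds:
  assumes "\<And>f. f \<in> set t \<rightarrow>\<^sub>E B \<Longrightarrow> 0 \<le> F f \<and> F f \<le> 1"
  shows "0 \<le> enc B t F h \<and> enc B t F h \<le> 1"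
proof (cases "h \<in> tuples B (length t) \<and> cmpt t h")
  case True
  then have "fun_of t h \<in> set t \<rightarrow>\<^sub>E B" using fun_of_PiE by blast
  then show ?thesis using True assms unfolding enc_def by simp
next
  case False then show ?thesis unfolding enc_def by auto
qed

lemma enc_eq_on:
  assumes "eq_on S t" "S \<subseteq> {..<length t}" "\<not> eq_on S h"
  shows "enc B t F h = 0"
proof -
  have "\<not> cmpt t h" using eq_on_cmpt assms by blast
  then show ?thesis by (rule enc_noncmpt)
qed

lemma enc_rels:
  assumes "\<And>f. f \<in> set t \<rightarrow>\<^sub>E B \<Longrightarrow> map f t \<notin> Rel \<Longrightarrow> F f = 0" "h \<notin> Rel"
  shows "enc B t F h = 0"
proof (cases "h \<in> tuples B (length t) \<and> cmpt t h")
  case True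
  then have f: "fun_of t h \<in> set t \<rightarrow>\<^sub>E B" using fun_of_PiE by blast
  have "map (fun_of t h) t = h" using True map_fun_of by blast
  then have "F (fun_of t h) = 0" using assms f by simp
  then show ?thesis using True unfolding enc_def by simp
next
  case False then show ?thesis unfolding enc_def by auto
qed

lemma enc2:
  fixes X :: "('x, 'r) struc" and A :: "('a, 'r) struc"
  assumes sig: "wf_sig sig ar" and wX: "wf_struc sig ar X" and wA: "wf_struc sig ar A"
    and sa: "SA_feasible sig k X A"
  shows "\<exists>P. \<forall>e\<in>constraints (ksig sig ar k) (kpow sig k X). \<forall>w\<in>set (snd e).
            Lam2 A ar (edge_label w e) (P (Inl w)) (P (Inr e))"
proof -
  let ?B = "univ A"
  have finB: "finite ?B" using wA unfolding wf_struc_def by simp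
  obtain p :: "'x set \<Rightarrow> ('x \<Rightarrow> 'a) \<Rightarrow> rat" and q :: "'r \<times> 'x list \<Rightarrow> ('x \<Rightarrow> 'a) \<Rightarrow> rat" where
    H1: "\<forall>V f. V \<subseteq> univ X \<and> 1 \<le> card V \<and> card V \<le> k \<and> f \<in> V \<rightarrow>\<^sub>E univ A
              \<longrightarrow> 0 \<le> p V f \<and> p V f \<le> 1" and
    H2: "\<forall>c\<in>constraints sig X. \<forall>f \<in> set (snd c) \<rightarrow>\<^sub>E univ A. 0 \<le> q c f \<and> q c f \<le> 1" and
    H3: "\<forall>V. V \<subseteq> univ X \<and> 1 \<le> card V \<and> card V \<le> k
              \<longrightarrow> (\<Sum>f \<in> V \<rightarrow>\<^sub>E univ A. p V f) = 1" and
    H4: "\<forall>U V f. U \<noteq> {} \<and> U \<subseteq> V \<and> V \<subseteq> univ X \<and> card V \<le> k \<and> f \<in> U \<rightarrow>\<^sub>E univ A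
              \<longrightarrow> p U f = (\<Sum>g \<in> {g \<in> V \<rightarrow>\<^sub>E univ A. restrict g U = f}. p V g)" and
    H5: "\<forall>c\<in>constraints sig X. \<forall>U f. U \<noteq> {} \<and> U \<subseteq> set (snd c) \<and> card U \<le> k \<and> f \<in> U \<rightarrow>\<^sub>E univ A
              \<longrightarrow> p U f = (\<Sum>g \<in> {g \<in> set (snd c) \<rightarrow>\<^sub>E univ A. restrict g U = f}. q c g)" and
    H6: "\<forall>c\<in>constraints sig X. \<forall>f \<in> set (snd c) \<rightarrow>\<^sub>E univ A.
              map f (snd c) \<notin> rels A (fst c) \<longrightarrow> q c f = 0"
    using sa by (rule SA_feasibleE)
  define E where "E w = (case w of Inl t \<Rightarrow> enc ?B t (p (set t)) | Inr c \<Rightarrow> enc ?B (snd c) (q c))" for w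
  define P :: "('x list + 'r \<times> 'x list) + 'r ksym \<times> ('x list + 'r \<times> 'x list) list \<Rightarrow> 'a list \<Rightarrow> rat"
    where "P v = (case v of Inl w \<Rightarrow> E w | Inr e \<Rightarrow> E (hd (snd e)))" for v
  have tup: "set t \<subseteq> univ X \<and> 1 \<le> card (set t) \<and> card (set t) \<le> k"
    if "t \<in> tuples (univ X) j" "1 \<le> j" "j \<le> k" for t j
  proof -
    have "length t = j" using that unfolding tuples_def by simp
    then have "t \<noteq> []" using that by auto
    then have "1 \<le> card (set t)" "card (set t) \<le> length t" using card_set_bounds by blast+
    then show ?thesis using that \<open>length t = j\<close> unfolding tuples_def by simp
  qed
  have main: "Lam2 A ar (edge_label w e) (P (Inl w)) (P (Inr e))"
    if e: "e \<in> constraints (ksig sig ar k) (kpow sig k X)" and w: "w \<in> set (snd e)" for e w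
  proof -
    obtain S l where el: "e = (S, l)" by (cases e)
    have S: "S \<in> ksig sig ar k" using e unfolding el kcons_iff by simp
    have l: "l \<in> kpow_rels X S" using e unfolding el kcons_iff by simp
    have wl: "w \<in> set l" using w el by simp
    define I where "I = fst (edge_label w e)"
    have lab: "edge_label w e = (I, S)" unfolding I_def el edge_label_def by simp
    have I0: "w = l ! 0" if "0 \<in> I" using edge_label_kpow(2)[of 0 w e] that unfolding I_def el by simp
    have I1: "w = l ! 1" if "1 \<in> I" using edge_label_kpow(2)[of 1 w e] that unfolding I_def el by simp
    have Pw: "P (Inl w) = E w" unfolding P_def by simp
    have Pe: "P (Inr e) = E (hd l)" unfolding P_def el by simp
    show ?thesis
    proof (cases S)
      case (TS j S')
      obtain t where t: "l = [Inl t]" "t \<in> tuples (univ X) j" "eq_on S' t" using l unfolding TS by auto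
      have j: "1 \<le> j" "j \<le> k" "S' \<subseteq> {..<j}" using S unfolding TS ksig_TS by simp_all
      have wt: "w = Inl t" using wl t by simp
      have lt: "length t = j" using t unfolding tuples_def by simp
      have tp: "set t \<subseteq> univ X \<and> 1 \<le> card (set t) \<and> card (set t) \<le> k" using tup[OF t(2) j(1) j(2)] .
      have F: "P (Inl w) = enc ?B t (p (set t))" unfolding wt by (simp add: P_def E_def)
      have b: "\<forall>h. 0 \<le> P (Inl w) h \<and> P (Inl w) h \<le> 1"
      proof
        fix h
        have "\<And>f. f \<in> set t \<rightarrow>\<^sub>E ?B \<Longrightarrow> 0 \<le> p (set t) f \<and> p (set t) f \<le> 1"
          using H1 tp by blast
        then show "0 \<le> P (Inl w) h \<and> P (Inl w) h \<le> 1" unfolding F by (rule enc_bounds)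
      qed
      have z1: "\<forall>h. h \<notin> tuples ?B j \<longrightarrow> P (Inl w) h = 0" unfolding F enc_def lt by simp
      have z2: "\<forall>h. \<not> eq_on S' h \<longrightarrow> P (Inl w) h = 0"
      proof (intro allI impI)
        fix h :: "'a list" assume "\<not> eq_on S' h"
        moreover have "S' \<subseteq> {..<length t}" using j(3) lt by simp
        ultimately show "P (Inl w) h = 0" unfolding F using enc_eq_on[OF t(3)] by blast
      qed
      have "(\<Sum>h\<in>tuples ?B (length t). P (Inl w) h) = (\<Sum>f\<in>set t \<rightarrow>\<^sub>E ?B. p (set t) f)"
        unfolding F by (rule sum_enc[OF finB])
      also have "\<dots> = 1" using H3 tp by blast
      finally have s: "(\<Sum>h\<in>tuples ?B j. P (Inl w) h) = 1" unfolding lt .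
      show ?thesis unfolding Lam2_def lab TS using b z1 z2 s by simp
    next
      case (RS R S')
      obtain a where a: "l = [Inr (R, a)]" "a \<in> rels X R" "eq_on S' a" using l unfolding RS by auto
      have R: "R \<in> sig" "S' \<subseteq> {..<ar R}" using S unfolding RS ksig_RS by simp_all
      have c: "(R, a) \<in> constraints sig X" using a R unfolding constraints_def by simp
      have la: "length a = ar R" using wf_cons(3)[OF wX c] by simp
      have wa: "w = Inr (R, a)" using wl a by simp
      have F: "P (Inl w) = enc ?B a (q (R, a))" unfolding wa by (simp add: P_def E_def)
      have b: "\<forall>h. 0 \<le> P (Inl w) h \<and> P (Inl w) h \<le> 1"
      proof
        fix h
        have "\<And>f. f \<in> set a \<rightarrow>\<^sub>E ?B \<Longrightarrow> 0 \<le> q (R, a) f \<and> q (R, a) f \<le> 1"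
          using H2 c by fastforce
        then show "0 \<le> P (Inl w) h \<and> P (Inl w) h \<le> 1" unfolding F by (rule enc_bounds)
      qed
      have z1: "\<forall>h. h \<notin> rels A R \<longrightarrow> P (Inl w) h = 0"
      proof (intro allI impI)
        fix h assume h: "h \<notin> rels A R"
        have "\<And>f. f \<in> set a \<rightarrow>\<^sub>E ?B \<Longrightarrow> map f a \<notin> rels A R \<Longrightarrow> q (R, a) f = 0"
          using H6 c by fastforce
        then show "P (Inl w) h = 0" unfolding F using h by (rule enc_rels)
      qed
      have z2: "\<forall>h. \<not> eq_on S' h \<longrightarrow> P (Inl w) h = 0"
      proof (intro allI impI)
        fix h :: "'a list" assume "\<not> eq_on S' h"
        moreover have "S' \<subseteq> {..<length a}" using R(2) la by simp
        ultimately show "P (Inl w) h = 0" unfolding F using enc_eq_on[OF a(3)] by blast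
      qed
      show ?thesis unfolding Lam2_def lab RS using b z1 z2 by simp
    next
      case (Ti j i)
      obtain t where t: "l = [Inl t, Inl (proj i t)]" "t \<in> tuples (univ X) j" using l unfolding Ti by auto
      have ji: "1 \<le> j" "j \<le> k" "1 \<le> length i" "length i \<le> k" "set i \<subseteq> {..<j}"
        using S unfolding Ti ksig_Ti by simp_all
      have lt: "length t = j" using t unfolding tuples_def by simp
      have tp: "set t \<subseteq> univ X \<and> 1 \<le> card (set t) \<and> card (set t) \<le> k" using tup[OF t(2) ji(1) ji(2)] .
      have G: "P (Inr e) = enc ?B t (p (set t))" unfolding Pe t E_def by simp
      have c0: "0 \<in> I \<longrightarrow> P (Inr e) = P (Inl w)"
      proof
        assume "0 \<in> I" then have "w = Inl t" using I0 t by simp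
        then show "P (Inr e) = P (Inl w)" unfolding G by (simp add: P_def E_def)
      qed
      have c1: "1 \<in> I \<longrightarrow> (\<forall>h'. P (Inl w) h' = (\<Sum>h\<in>{h\<in>tuples ?B j. proj i h = h'}. P (Inr e) h))"
      proof (intro impI allI)
        fix h' assume "1 \<in> I" then have ws: "w = Inl (proj i t)" using I1 t by simp
        have si: "set i \<subseteq> {..<length t}" using ji lt by simp
        have ne: "proj i t \<noteq> []" using ji unfolding proj_def by auto
        have sub: "set (proj i t) \<subseteq> set t" by (rule set_proj[OF si])
        have "enc ?B (proj i t) (p (set (proj i t))) h' = (\<Sum>h\<in>{h\<in>tuples ?B (length t). proj i h = h'}. enc ?B t (p (set t)) h)"
        proof (rule marg_from_SA[OF finB si])
          fix h' assume h': "h' \<in> tuples ?B (length i)" "cmpt (proj i t) h'"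
          have "length (proj i t) = length i" unfolding proj_def by simp
          then have f: "fun_of (proj i t) h' \<in> set (proj i t) \<rightarrow>\<^sub>E ?B" using h' fun_of_PiE by metis
          have "set (proj i t) \<noteq> {} \<and> set (proj i t) \<subseteq> set t \<and> set t \<subseteq> univ X \<and> card (set t) \<le> k \<and>
                fun_of (proj i t) h' \<in> set (proj i t) \<rightarrow>\<^sub>E ?B" using ne sub tp f by simp
          then show "p (set (proj i t)) (fun_of (proj i t) h') =
            (\<Sum>g\<in>{g \<in> set t \<rightarrow>\<^sub>E ?B. restrict g (set (proj i t)) = fun_of (proj i t) h'}. p (set t) g)"
            using H4 by blast
        qed
        then show "P (Inl w) h' = (\<Sum>h\<in>{h\<in>tuples ?B j. proj i h = h'}. P (Inr e) h)"
          unfolding G ws lt by (simp add: P_def E_def)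
      qed
      show ?thesis unfolding Lam2_def lab Ti using c0 c1 by simp
    next
      case (Ri R i)
      obtain a where a: "l = [Inr (R, a), Inl (proj i a)]" "a \<in> rels X R" using l unfolding Ri by auto
      have ji: "R \<in> sig" "1 \<le> length i" "length i \<le> k" "set i \<subseteq> {..<ar R}"
        using S unfolding Ri ksig_Ri by simp_all
      have c: "(R, a) \<in> constraints sig X" using a ji unfolding constraints_def by simp
      have la: "length a = ar R" using wf_cons(3)[OF wX c] by simp
      have G: "P (Inr e) = enc ?B a (q (R, a))" unfolding Pe a E_def by simp
      have c0: "0 \<in> I \<longrightarrow> P (Inr e) = P (Inl w)"
      proof
        assume "0 \<in> I" then have "w = Inr (R, a)" using I0 a by simp
        then show "P (Inr e) = P (Inl w)" unfolding G by (simp add: P_def E_def)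
      qed
      have c1: "1 \<in> I \<longrightarrow> (\<forall>h'. P (Inl w) h' = (\<Sum>h\<in>{h\<in>tuples ?B (ar R). proj i h = h'}. P (Inr e) h))"
      proof (intro impI allI)
        fix h' assume "1 \<in> I" then have ws: "w = Inl (proj i a)" using I1 a by simp
        have si: "set i \<subseteq> {..<length a}" using ji la by simp
        have ne: "proj i a \<noteq> []" using ji unfolding proj_def by auto
        have sub: "set (proj i a) \<subseteq> set a" by (rule set_proj[OF si])
        have cardU: "card (set (proj i a)) \<le> k"
          using card_length[of "proj i a"] ji unfolding proj_def by simp
        have "enc ?B (proj i a) (p (set (proj i a))) h' = (\<Sum>h\<in>{h\<in>tuples ?B (length a). proj i h = h'}. enc ?B a (q (R, a)) h)"
        proof (rule marg_from_SA[OF finB si])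
          fix h' assume h': "h' \<in> tuples ?B (length i)" "cmpt (proj i a) h'"
          have "length (proj i a) = length i" unfolding proj_def by simp
          then have f: "fun_of (proj i a) h' \<in> set (proj i a) \<rightarrow>\<^sub>E ?B" using h' fun_of_PiE by metis
          have "set (proj i a) \<noteq> {} \<and> set (proj i a) \<subseteq> set (snd (R, a)) \<and> card (set (proj i a)) \<le> k \<and>
                fun_of (proj i a) h' \<in> set (proj i a) \<rightarrow>\<^sub>E ?B" using ne sub cardU f by simp
          then show "p (set (proj i a)) (fun_of (proj i a) h') =
            (\<Sum>g\<in>{g \<in> set a \<rightarrow>\<^sub>E ?B. restrict g (set (proj i a)) = fun_of (proj i a) h'}. q (R, a) g)"
            using H5 c by fastforce
        qed
        then show "P (Inl w) h' = (\<Sum>h\<in>{h\<in>tuples ?B (ar R). proj i h = h'}. P (Inr e) h)"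
          unfolding G ws la by (simp add: P_def E_def)
      qed
      show ?thesis unfolding Lam2_def lab Ri using c0 c1 by simp
    qed
  qed
  show ?thesis using main by blast
qed



definition en :: "'x set \<Rightarrow> 'x list" where
  "en V = (SOME t. distinct t \<and> set t = V)"

lemma en: assumes "finite V" shows "distinct (en V)" "set (en V) = V" "length (en V) = card V"
proof -
  have "\<exists>t. distinct t \<and> set t = V" using finite_distinct_list[OF assms] by blast
  then have "distinct (en V) \<and> set (en V) = V" unfolding en_def by (rule someI_ex)
  then show "distinct (en V)" "set (en V) = V" by auto
  then show "length (en V) = card V" using distinct_card[of "en V"] by simp
qed

lemma distinct_cmpt: "distinct t \<Longrightarrow> length h = length t \<Longrightarrow> cmpt t h"
  unfolding cmpt_def by (simp add: nth_eq_iff_index_eq)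

lemma proj_idx:
  assumes "set s \<subseteq> set t"
  shows "proj (map (idx t) s) t = s" "set (map (idx t) s) \<subseteq> {..<length t}" "length (map (idx t) s) = length s"
proof -
  have yt: "y \<in> set t" if "y \<in> set s" for y using assms that by blast
  have 1: "t ! idx t y = y" if "y \<in> set s" for y by (rule idx(2)[OF yt[OF that]])
  have "map (\<lambda>y. t ! idx t y) s = s" by (rule map_idI) (rule 1)
  then show "proj (map (idx t) s) t = s" unfolding proj_def by (simp add: o_def)
  have 2: "idx t y < length t" if "y \<in> set s" for y by (rule idx(1)[OF yt[OF that]])
  show "set (map (idx t) s) \<subseteq> {..<length t}"
  proof
    fix n assume "n \<in> set (map (idx t) s)"
    then obtain y where "y \<in> set s" "n = idx t y" by auto
    then show "n \<in> {..<length t}" using 2 by simp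
  qed
  show "length (map (idx t) s) = length s" by simp
qed

lemma el_snd: "snd (edge_label w e) = fst e"
  unfolding edge_label_def by simp

context
  fixes sig :: "'r set" and ar :: "'r \<Rightarrow> nat" and k :: nat
    and X :: "('x, 'r) struc" and A :: "('a, 'r) struc"
    and P :: "('x list + 'r \<times> 'x list) + 'r ksym \<times> ('x list + 'r \<times> 'x list) list \<Rightarrow> 'a list \<Rightarrow> rat"
  assumes wX: "wf_struc sig ar X"
    and PL: "\<forall>e\<in>constraints (ksig sig ar k) (kpow sig k X). \<forall>w\<in>set (snd e).
            Lam2 A ar (edge_label w e) (P (Inl w)) (P (Inr e))"
begin

lemma TSfact:
  assumes t: "t \<in> tuples (univ X) j" and j: "1 \<le> j" "j \<le> k"
  shows "(\<forall>h. 0 \<le> P (Inl (Inl t)) h \<and> P (Inl (Inl t)) h \<le> 1) \<and>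
         (\<forall>h. h \<notin> tuples (univ A) j \<longrightarrow> P (Inl (Inl t)) h = 0) \<and>
         (\<Sum>h\<in>tuples (univ A) j. P (Inl (Inl t)) h) = 1"
proof -
  let ?e = "(TS j {}, [Inl t]) :: 'r ksym \<times> ('x list + 'r \<times> 'x list) list"
  have "TS j {} \<in> ksig sig ar k" using j unfolding ksig_TS by simp
  moreover have "[Inl t] \<in> kpow_rels X (TS j {})" using t by (simp add: eq_on_def)
  ultimately have e: "?e \<in> constraints (ksig sig ar k) (kpow sig k X)" unfolding kcons_iff by simp
  have "Lam2 A ar (edge_label (Inl t) ?e) (P (Inl (Inl t))) (P (Inr ?e))"
    using PL e by fastforce
  then show ?thesis unfolding Lam2_def edge_label_def by simp
qed

lemma RSfact:
  assumes c: "c \<in> constraints sig X" and S': "S' \<subseteq> {..<ar (fst c)}" "eq_on S' (snd c)"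
  shows "(\<forall>h. 0 \<le> P (Inl (Inr c)) h \<and> P (Inl (Inr c)) h \<le> 1) \<and>
         (\<forall>h. h \<notin> rels A (fst c) \<longrightarrow> P (Inl (Inr c)) h = 0) \<and>
         (\<forall>h. \<not> eq_on S' h \<longrightarrow> P (Inl (Inr c)) h = 0)"
proof -
  obtain R a where ca: "c = (R, a)" by (cases c)
  have R: "R \<in> sig" "a \<in> rels X R" using c unfolding ca constraints_def by auto
  let ?e = "(RS R S', [Inr (R, a)]) :: 'r ksym \<times> ('x list + 'r \<times> 'x list) list"
  have "RS R S' \<in> ksig sig ar k" using R S' unfolding ksig_RS ca by simp
  moreover have "[Inr (R, a)] \<in> kpow_rels X (RS R S')" using R S' unfolding ca by simp
  ultimately have e: "?e \<in> constraints (ksig sig ar k) (kpow sig k X)" unfolding kcons_iff by simp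
  have "Lam2 A ar (edge_label (Inr (R, a)) ?e) (P (Inl (Inr (R, a)))) (P (Inr ?e))"
    using PL e by fastforce
  then show ?thesis unfolding Lam2_def edge_label_def ca by simp
qed

lemma Tifact:
  assumes t: "t \<in> tuples (univ X) j" and ji: "1 \<le> j" "j \<le> k" "1 \<le> length i" "length i \<le> k" "set i \<subseteq> {..<j}"
  shows "P (Inl (Inl (proj i t))) h' = (\<Sum>h\<in>{h\<in>tuples (univ A) j. proj i h = h'}. P (Inl (Inl t)) h)"
proof -
  let ?e = "(Ti j i, [Inl t, Inl (proj i t)]) :: 'r ksym \<times> ('x list + 'r \<times> 'x list) list"
  have "Ti j i \<in> ksig sig ar k" using ji unfolding ksig_Ti by simp
  moreover have "[Inl t, Inl (proj i t)] \<in> kpow_rels X (Ti j i)" using t by simp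
  ultimately have e: "?e \<in> constraints (ksig sig ar k) (kpow sig k X)" unfolding kcons_iff by simp
  have L1: "Lam2 A ar (edge_label (Inl t) ?e) (P (Inl (Inl t))) (P (Inr ?e))"
    using PL e by fastforce
  have L2: "Lam2 A ar (edge_label (Inl (proj i t)) ?e) (P (Inl (Inl (proj i t)))) (P (Inr ?e))"
    using PL e by fastforce
  have "0 \<in> fst (edge_label (Inl t) ?e)" unfolding edge_label_def by simp
  moreover have "0 \<in> fst (edge_label (Inl t) ?e) \<longrightarrow> P (Inr ?e) = P (Inl (Inl t))"
    using L1 unfolding Lam2_def el_snd fst_conv ksym.case(3) by (rule conjunct1)
  ultimately have G: "P (Inr ?e) = P (Inl (Inl t))" by (rule rev_mp)
  have "1 \<in> fst (edge_label (Inl (proj i t)) ?e)" unfolding edge_label_def by simp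
  moreover have "1 \<in> fst (edge_label (Inl (proj i t)) ?e) \<longrightarrow> (\<forall>h'. P (Inl (Inl (proj i t))) h' = (\<Sum>h\<in>{h\<in>tuples (univ A) j. proj i h = h'}. P (Inr ?e) h))"
    using L2 unfolding Lam2_def el_snd fst_conv ksym.case(3) by (rule conjunct2)
  ultimately have "\<forall>h'. P (Inl (Inl (proj i t))) h' = (\<Sum>h\<in>{h\<in>tuples (univ A) j. proj i h = h'}. P (Inr ?e) h)"
    by (rule rev_mp)
  then show ?thesis unfolding G by (rule spec)
qed

lemma Rifact:
  assumes c: "c \<in> constraints sig X" and ji: "1 \<le> length i" "length i \<le> k" "set i \<subseteq> {..<ar (fst c)}"
  shows "P (Inl (Inl (proj i (snd c)))) h' = (\<Sum>h\<in>{h\<in>tuples (univ A) (ar (fst c)). proj i h = h'}. P (Inl (Inr c)) h)"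
proof -
  obtain R a where ca: "c = (R, a)" by (cases c)
  have R: "R \<in> sig" "a \<in> rels X R" using c unfolding ca constraints_def by auto
  let ?e = "(Ri R i, [Inr (R, a), Inl (proj i a)]) :: 'r ksym \<times> ('x list + 'r \<times> 'x list) list"
  have "Ri R i \<in> ksig sig ar k" using ji R unfolding ksig_Ri ca by simp
  moreover have "[Inr (R, a), Inl (proj i a)] \<in> kpow_rels X (Ri R i)" using R by simp
  ultimately have e: "?e \<in> constraints (ksig sig ar k) (kpow sig k X)" unfolding kcons_iff by simp
  have L1: "Lam2 A ar (edge_label (Inr (R, a)) ?e) (P (Inl (Inr (R, a)))) (P (Inr ?e))"
    using PL e by fastforce
  have L2: "Lam2 A ar (edge_label (Inl (proj i a)) ?e) (P (Inl (Inl (proj i a)))) (P (Inr ?e))"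
    using PL e by fastforce
  have "0 \<in> fst (edge_label (Inr (R, a)) ?e)" unfolding edge_label_def by simp
  moreover have "0 \<in> fst (edge_label (Inr (R, a)) ?e) \<longrightarrow> P (Inr ?e) = P (Inl (Inr (R, a)))"
    using L1 unfolding Lam2_def el_snd fst_conv ksym.case(4) by (rule conjunct1)
  ultimately have G: "P (Inr ?e) = P (Inl (Inr (R, a)))" by (rule rev_mp)
  have "1 \<in> fst (edge_label (Inl (proj i a)) ?e)" unfolding edge_label_def by simp
  moreover have "1 \<in> fst (edge_label (Inl (proj i a)) ?e) \<longrightarrow> (\<forall>h'. P (Inl (Inl (proj i a))) h' = (\<Sum>h\<in>{h\<in>tuples (univ A) (ar R). proj i h = h'}. P (Inr ?e) h))"
    using L2 unfolding Lam2_def el_snd fst_conv ksym.case(4) by (rule conjunct2)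
  ultimately have "\<forall>h'. P (Inl (Inl (proj i a))) h' = (\<Sum>h\<in>{h\<in>tuples (univ A) (ar R). proj i h = h'}. P (Inr ?e) h)"
    by (rule rev_mp)
  then show ?thesis unfolding G ca fst_conv snd_conv by (rule spec)
qed

end



lemma dec2:
  fixes X :: "('x, 'r) struc" and A :: "('a, 'r) struc"
    and P :: "('x list + 'r \<times> 'x list) + 'r ksym \<times> ('x list + 'r \<times> 'x list) list \<Rightarrow> 'a list \<Rightarrow> rat"
  assumes sig: "wf_sig sig ar" and wX: "wf_struc sig ar X" and wA: "wf_struc sig ar A"
    and PL: "\<forall>e\<in>constraints (ksig sig ar k) (kpow sig k X). \<forall>w\<in>set (snd e).
            Lam2 A ar (edge_label w e) (P (Inl w)) (P (Inr e))"
  shows "SA_feasible sig k X A"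
proof -
  let ?B = "univ A"
  have finB: "finite ?B" using wA unfolding wf_struc_def by simp
  have finX: "finite (univ X)" using wX unfolding wf_struc_def by simp
  define p where "p V f = P (Inl (Inl (en V))) (map f (en V))" for V and f :: "'x \<Rightarrow> 'a"
  define q where "q c f = P (Inl (Inr c)) (map f (snd c))" for c and f :: "'x \<Rightarrow> 'a"
  have finV: "finite V" if "V \<subseteq> univ X" for V using finite_subset[OF that finX] .
  have tupV: "en V \<in> tuples (univ X) (card V)" if "V \<subseteq> univ X" for V
    using en[OF finV[OF that]] that unfolding tuples_def by simp
  have C1: "\<forall>V f. V \<subseteq> univ X \<and> 1 \<le> card V \<and> card V \<le> k \<and> f \<in> V \<rightarrow>\<^sub>E univ A
              \<longrightarrow> 0 \<le> p V f \<and> p V f \<le> 1"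
  proof (intro allI impI)
    fix V f assume a: "V \<subseteq> univ X \<and> 1 \<le> card V \<and> card V \<le> k \<and> f \<in> V \<rightarrow>\<^sub>E univ A"
    then have V: "V \<subseteq> univ X" "1 \<le> card V" "card V \<le> k" by auto
    have "\<forall>h. 0 \<le> P (Inl (Inl (en V))) h \<and> P (Inl (Inl (en V))) h \<le> 1"
      using TSfact[OF wX PL tupV[OF V(1)] V(2) V(3)] by blast
    then show "0 \<le> p V f \<and> p V f \<le> 1" unfolding p_def by blast
  qed
  have RS0: "(\<forall>h. 0 \<le> P (Inl (Inr c)) h \<and> P (Inl (Inr c)) h \<le> 1) \<and>
         (\<forall>h. h \<notin> rels A (fst c) \<longrightarrow> P (Inl (Inr c)) h = 0)" if c: "c \<in> constraints sig X" for c
  proof -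
    have "{} \<subseteq> {..<ar (fst c)}" "eq_on {} (snd c)" by (auto simp: eq_on_def)
    then show ?thesis using RSfact[OF wX PL c] by blast
  qed
  have C2: "\<forall>c\<in>constraints sig X. \<forall>f \<in> set (snd c) \<rightarrow>\<^sub>E univ A. 0 \<le> q c f \<and> q c f \<le> 1"
    unfolding q_def using RS0 by blast
  have C3: "\<forall>V. V \<subseteq> univ X \<and> 1 \<le> card V \<and> card V \<le> k
              \<longrightarrow> (\<Sum>f \<in> V \<rightarrow>\<^sub>E univ A. p V f) = 1"
  proof (intro allI impI)
    fix V assume a: "V \<subseteq> univ X \<and> 1 \<le> card V \<and> card V \<le> k"
    then have V: "V \<subseteq> univ X" "1 \<le> card V" "card V \<le> k" by auto
    have e: "distinct (en V)" "set (en V) = V" "length (en V) = card V" using en[OF finV[OF V(1)]] by auto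
    have "(\<Sum>h\<in>tuples ?B (length (en V)). P (Inl (Inl (en V))) h) =
          (\<Sum>f\<in>set (en V) \<rightarrow>\<^sub>E ?B. P (Inl (Inl (en V))) (map f (en V)))"
    proof (rule sum_cmpt[OF finB])
      fix h assume "h \<in> tuples ?B (length (en V))" "\<not> cmpt (en V) h"
      then show "P (Inl (Inl (en V))) h = 0" using distinct_cmpt[OF e(1)] unfolding tuples_def by blast
    qed
    moreover have "(\<Sum>h\<in>tuples ?B (card V). P (Inl (Inl (en V))) h) = 1"
      using TSfact[OF wX PL tupV[OF V(1)] V(2) V(3)] by blast
    ultimately show "(\<Sum>f \<in> V \<rightarrow>\<^sub>E univ A. p V f) = 1" unfolding p_def using e by simp
  qed
  have C4: "\<forall>U V f. U \<noteq> {} \<and> U \<subseteq> V \<and> V \<subseteq> univ X \<and> card V \<le> k \<and> f \<in> U \<rightarrow>\<^sub>E univ A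
              \<longrightarrow> p U f = (\<Sum>g \<in> {g \<in> V \<rightarrow>\<^sub>E univ A. restrict g U = f}. p V g)"
  proof (intro allI impI)
    fix U V f assume a: "U \<noteq> {} \<and> U \<subseteq> V \<and> V \<subseteq> univ X \<and> card V \<le> k \<and> f \<in> U \<rightarrow>\<^sub>E univ A"
    then have UV: "U \<noteq> {}" "U \<subseteq> V" "V \<subseteq> univ X" "card V \<le> k" "f \<in> U \<rightarrow>\<^sub>E ?B" by auto
    have fV: "finite V" using finV[OF UV(3)] .
    have fU: "finite U" using finite_subset[OF UV(2) fV] .
    define tV where "tV = en V"
    define tU where "tU = en U"
    have eV: "distinct tV" "set tV = V" "length tV = card V" using en[OF fV] unfolding tV_def by auto
    have eU: "distinct tU" "set tU = U" "length tU = card U" using en[OF fU] unfolding tU_def by auto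
    define i where "i = map (idx tV) tU"
    have sUV: "set tU \<subseteq> set tV" using eU eV UV by simp
    have pi: "proj i tV = tU" "set i \<subseteq> {..<length tV}" "length i = length tU"
      using proj_idx[OF sUV] unfolding i_def by auto
    have cU: "1 \<le> card U" using UV(1) fU by (simp add: Suc_le_eq card_gt_0_iff)
    have cUV: "card U \<le> card V" using card_mono[OF fV UV(2)] .
    have ji: "1 \<le> card V" "card V \<le> k" "1 \<le> length i" "length i \<le> k" "set i \<subseteq> {..<card V}"
      using cU cUV UV(4) pi eU eV by auto
    have T: "P (Inl (Inl (proj i tV))) (map f tU) = (\<Sum>h\<in>{h\<in>tuples ?B (card V). proj i h = map f tU}. P (Inl (Inl tV)) h)"
      using Tifact[OF wX PL tupV[OF UV(3)] ji] unfolding tV_def by simp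
    have fpi: "f \<in> set (proj i tV) \<rightarrow>\<^sub>E ?B" using UV(5) pi(1) eU(2) by simp
    have M: "(\<Sum>h\<in>{h\<in>tuples ?B (length tV). proj i h = map f (proj i tV)}. P (Inl (Inl tV)) h)
        = (\<Sum>g\<in>{g \<in> set tV \<rightarrow>\<^sub>E ?B. restrict g (set (proj i tV)) = f}. P (Inl (Inl tV)) (map g tV))"
    proof (rule marg_sum[OF finB _ pi(2) fpi])
      fix h assume "h \<in> tuples ?B (length tV)" "\<not> cmpt tV h"
      then show "P (Inl (Inl tV)) h = 0" using distinct_cmpt[OF eV(1)] unfolding tuples_def by blast
    qed
    show "p U f = (\<Sum>g \<in> {g \<in> V \<rightarrow>\<^sub>E univ A. restrict g U = f}. p V g)"
      using T M unfolding p_def tU_def[symmetric] tV_def[symmetric] pi(1) eV eU by simp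
  qed
  have C5: "\<forall>c\<in>constraints sig X. \<forall>U f. U \<noteq> {} \<and> U \<subseteq> set (snd c) \<and> card U \<le> k \<and> f \<in> U \<rightarrow>\<^sub>E univ A
              \<longrightarrow> p U f = (\<Sum>g \<in> {g \<in> set (snd c) \<rightarrow>\<^sub>E univ A. restrict g U = f}. q c g)"
  proof (intro ballI allI impI)
    fix c U f assume c: "c \<in> constraints sig X"
      and a: "U \<noteq> {} \<and> U \<subseteq> set (snd c) \<and> card U \<le> k \<and> f \<in> U \<rightarrow>\<^sub>E univ A"
    then have UV: "U \<noteq> {}" "U \<subseteq> set (snd c)" "card U \<le> k" "f \<in> U \<rightarrow>\<^sub>E ?B" by auto
    define t where "t = snd c"
    have lt: "length t = ar (fst c)" using wf_cons(3)[OF wX c] unfolding t_def by simp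
    have fU: "finite U" using finite_subset[OF UV(2)] by simp
    define tU where "tU = en U"
    have eU: "distinct tU" "set tU = U" "length tU = card U" using en[OF fU] unfolding tU_def by auto
    define i where "i = map (idx t) tU"
    have sUV: "set tU \<subseteq> set t" using eU UV unfolding t_def by simp
    have pi: "proj i t = tU" "set i \<subseteq> {..<length t}" "length i = length tU"
      using proj_idx[OF sUV] unfolding i_def by auto
    have cU: "1 \<le> card U" using UV(1) fU by (simp add: Suc_le_eq card_gt_0_iff)
    have ji: "1 \<le> length i" "length i \<le> k" "set i \<subseteq> {..<ar (fst c)}"
      using cU UV(3) pi eU lt by auto
    have T: "P (Inl (Inl (proj i t))) (map f tU) = (\<Sum>h\<in>{h\<in>tuples ?B (ar (fst c)). proj i h = map f tU}. P (Inl (Inr c)) h)"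
      using Rifact[OF wX PL c ji] unfolding t_def by simp
    have fpi: "f \<in> set (proj i t) \<rightarrow>\<^sub>E ?B" using UV(4) pi(1) eU(2) by simp
    have M: "(\<Sum>h\<in>{h\<in>tuples ?B (length t). proj i h = map f (proj i t)}. P (Inl (Inr c)) h)
        = (\<Sum>g\<in>{g \<in> set t \<rightarrow>\<^sub>E ?B. restrict g (set (proj i t)) = f}. P (Inl (Inr c)) (map g t))"
    proof (rule marg_sum[OF finB _ pi(2) fpi])
      fix h assume h: "h \<in> tuples ?B (length t)" "\<not> cmpt t h"
      then obtain n m where nm: "n < length t" "m < length t" "t!n = t!m" "h!n \<noteq> h!m"
        unfolding cmpt_def tuples_def by auto
      have S': "{n, m} \<subseteq> {..<ar (fst c)}" using nm lt by simp
      have eqa: "eq_on {n, m} (snd c)" using nm unfolding eq_on_def t_def by auto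
      have neq: "\<not> eq_on {n, m} h" using nm unfolding eq_on_def by auto
      show "P (Inl (Inr c)) h = 0" using RSfact[OF wX PL c S' eqa] neq by blast
    qed
    show "p U f = (\<Sum>g \<in> {g \<in> set (snd c) \<rightarrow>\<^sub>E univ A. restrict g U = f}. q c g)"
      using T M unfolding p_def q_def tU_def[symmetric] t_def[symmetric] pi(1) eU lt by simp
  qed
  have C6: "\<forall>c\<in>constraints sig X. \<forall>f \<in> set (snd c) \<rightarrow>\<^sub>E univ A.
              map f (snd c) \<notin> rels A (fst c) \<longrightarrow> q c f = 0"
    unfolding q_def using RS0 by blast
  show ?thesis unfolding SA_feasible_def
    apply (rule exI[of _ p], rule exI[of _ q])
    using C1 C2 C3 C4 C5 C6 by (intro conjI) assumption+
qed



lemma dir2: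
  fixes X :: "('x, 'r) struc" and X' :: "('y, 'r) struc" and A :: "('a, 'r) struc"
  assumes sig: "wf_sig sig ar" and wX: "wf_struc sig ar X" and wX': "wf_struc sig ar X'"
    and wA: "wf_struc sig ar A" and eq: "equiv1 (ksig sig ar k) (kpow sig k X) (kpow sig k X')"
    and sa: "SA_feasible sig k X A"
  shows "SA_feasible sig k X' A"
proof -
  have finB: "finite (univ A)" using wA unfolding wf_struc_def by simp
  obtain P :: "('x list + 'r \<times> 'x list) + 'r ksym \<times> ('x list + 'r \<times> 'x list) list \<Rightarrow> 'a list \<Rightarrow> rat"
    where P: "\<forall>e\<in>constraints (ksig sig ar k) (kpow sig k X). \<forall>w\<in>set (snd e).
            Lam2 A ar (edge_label w e) (P (Inl w)) (P (Inr e))"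
    using enc2[OF sig wX wA sa] by blast
  have wk: "finite (univ (kpow sig k X))" "finite (constraints (ksig sig ar k) (kpow sig k X))"
    "\<forall>c\<in>constraints (ksig sig ar k) (kpow sig k X). snd c \<noteq> [] \<and> set (snd c) \<subseteq> univ (kpow sig k X)"
    using kpow_wf[OF sig wX] by blast+
  have wk': "finite (univ (kpow sig k X'))" "finite (constraints (ksig sig ar k) (kpow sig k X'))"
    "\<forall>c\<in>constraints (ksig sig ar k) (kpow sig k X'). snd c \<noteq> [] \<and> set (snd c) \<subseteq> univ (kpow sig k X')"
    using kpow_wf[OF sig wX'] by blast+
  have "\<exists>P'::('y list + 'r \<times> 'y list) + 'r ksym \<times> ('y list + 'r \<times> 'y list) list \<Rightarrow> 'a list \<Rightarrow> rat.
           (\<forall>v\<in>fg_vertices (ksig sig ar k) (kpow sig k X'). (\<lambda>b F. True) (isl v) (P' v)) \<and>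
           (\<forall>c\<in>constraints (ksig sig ar k) (kpow sig k X'). \<forall>a\<in>set (snd c). Lam2 A ar (edge_label a c) (P' (Inl a)) (P' (Inr c)))"
  proof (rule transfer[where Y = "kpow sig k X" and P = P])
    show "finite (univ (kpow sig k X))" by (rule wk(1))
    show "finite (constraints (ksig sig ar k) (kpow sig k X))" by (rule wk(2))
    show "finite (univ (kpow sig k X'))" by (rule wk'(1))
    show "finite (constraints (ksig sig ar k) (kpow sig k X'))" by (rule wk'(2))
    show "\<forall>c\<in>constraints (ksig sig ar k) (kpow sig k X). snd c \<noteq> [] \<and> set (snd c) \<subseteq> univ (kpow sig k X)" by (rule wk(3))
    show "\<forall>c\<in>constraints (ksig sig ar k) (kpow sig k X'). snd c \<noteq> [] \<and> set (snd c) \<subseteq> univ (kpow sig k X')" by (rule wk'(3))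
    show "equiv1 (ksig sig ar k) (kpow sig k X) (kpow sig k X')" by (rule eq)
    show "\<And>b S F. finite S \<Longrightarrow> S \<noteq> {} \<Longrightarrow> \<forall>i\<in>S. (\<lambda>b F. True) b (F i) \<Longrightarrow> (\<lambda>b F. True) b (avg F S)"
      by simp
    show "\<And>l S F G. finite S \<Longrightarrow> S \<noteq> {} \<Longrightarrow> \<forall>i\<in>S. Lam2 A ar l (F i) (G i) \<Longrightarrow> Lam2 A ar l (avg F S) (avg G S)"
      by (rule Lam2_conv[OF finB])
    show "\<forall>v\<in>fg_vertices (ksig sig ar k) (kpow sig k X). (\<lambda>b F. True) (isl v) (P v)" by simp
    show "\<forall>c\<in>constraints (ksig sig ar k) (kpow sig k X). \<forall>a\<in>set (snd c). Lam2 A ar (edge_label a c) (P (Inl a)) (P (Inr c))"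
      by (rule P)
  qed
  then obtain P' :: "('y list + 'r \<times> 'y list) + 'r ksym \<times> ('y list + 'r \<times> 'y list) list \<Rightarrow> 'a list \<Rightarrow> rat" where
    "\<forall>c\<in>constraints (ksig sig ar k) (kpow sig k X'). \<forall>a\<in>set (snd c). Lam2 A ar (edge_label a c) (P' (Inl a)) (P' (Inr c))"
    by blast
  then show ?thesis by (rule dec2[OF sig wX' wA])
qed

lemma equiv1_sym: "equiv1 sig A B \<Longrightarrow> equiv1 sig B A"
  unfolding equiv1_def by simp


theorem corollary7p5:
  fixes sig :: "'r set" and ar :: "'r \<Rightarrow> nat" and k :: nat
    and X :: "('x, 'r) struc" and X' :: "('y, 'r) struc" and A :: "('a, 'r) struc"
  assumes "wf_sig sig ar"
    and "wf_struc sig ar X" and "wf_struc sig ar X'" and "wf_struc sig ar A"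
    and "1 \<le> k"
    and "equivk sig ar k X X'"
  shows "SA_feasible sig k X A \<longleftrightarrow> SA_feasible sig k X' A"
proof (cases "k = 1")
  case True
  then have e: "equiv1 sig X X'" using assms(6) unfolding equivk_def by simp
  show ?thesis unfolding True
    using dir1[OF assms(1) assms(2) assms(3) assms(4) e] dir1[OF assms(1) assms(3) assms(2) assms(4) equiv1_sym[OF e]]
    by blast
next
  case False
  then have e: "equiv1 (ksig sig ar k) (kpow sig k X) (kpow sig k X')" using assms(6) unfolding equivk_def by simp
  show ?thesis
    using dir2[OF assms(1) assms(2) assms(3) assms(4) e] dir2[OF assms(1) assms(3) assms(2) assms(4) equiv1_sym[OF e]]
    by blast
qed

end
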